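(* Let $\mathfrak{g}$ be a finite-dimensional complex simple Lie algebra. The set $\widetilde{\mathbf{CP}_{\mathfrak{g}}}=\{\tilde f_\phi\}_\phi$, where $\phi$ ranges over all finite-dimensional representations of $\mathfrak{g}$, is a commutative monoid under the resolution product $*$, with unit element $z_0$.
   Context: Fix a Cartan subalgebra $\mathfrak{h}$ with simple roots $\alpha_1,\dots,\alpha_n$ and coroots $h_{\alpha_1},\dots,h_{\alpha_n}$ forming a basis of $\mathfrak{h}$. For a finite-dimensional representation $\phi:\mathfrak{g}\to\mathfrak{gl}(V)$, $\tilde f_\phi(z_0,\dots,z_n)=\det\big(z_0I+\sum_{i=1}^n z_i\phi(h_{\alpha_i})\big)$. If $\Gamma_\phi$ is the set of weights of $\phi$ and $d_\lambda$ the multiplicity of $\lambda\in\Gamma_\phi$, then $\tilde f_\phi=\prod_{\lambda\in\Gamma_\phi}\big(z_0+\sum_{i}\lambda(h_{\alpha_i})z_i\big)^{d_\lambda}$. The resolution product is $\tilde f_\phi*\tilde f_\varphi=\prod_{\lambda\in\Gamma_\phi,\mu\in\Gamma_\varphi}\big(z_0+\sum_{i=1}^n(\lambda(h_{\alpha_i})+\mu(h_{\alpha_i}))z_i\big)^{d_\lambda d_\mu}$. *)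

theory Defs
  imports "Jordan_Normal_Form.Determinant" "HOL-Algebra.Group" "HOL-Library.Multiset"
begin

definition lie_algebra :: "(complex \<Rightarrow> 'g::ab_group_add \<Rightarrow> 'g) \<Rightarrow> ('g \<Rightarrow> 'g \<Rightarrow> 'g) \<Rightarrow> bool" where
  "lie_algebra sc br \<longleftrightarrow> vector_space sc
     \<and> (\<forall>x. Vector_Spaces.linear sc sc (br x))
     \<and> (\<forall>y. Vector_Spaces.linear sc sc (\<lambda>x. br x y))
     \<and> (\<forall>x. br x x = 0)
     \<and> (\<forall>x y z. br x (br y z) + br y (br z x) + br z (br x y) = 0)"

definition finite_dim_lie :: "(complex \<Rightarrow> 'g::ab_group_add \<Rightarrow> 'g) \<Rightarrow> bool" where
  "finite_dim_lie sc \<longleftrightarrow> (\<exists>B. finite B \<and> module.span sc B = UNIV)"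

definition lie_ideal :: "(complex \<Rightarrow> 'g::ab_group_add \<Rightarrow> 'g) \<Rightarrow> ('g \<Rightarrow> 'g \<Rightarrow> 'g) \<Rightarrow> 'g set \<Rightarrow> bool" where
  "lie_ideal sc br I \<longleftrightarrow> module.subspace sc I \<and> (\<forall>x y. y \<in> I \<longrightarrow> br x y \<in> I)"

definition simple_lie :: "(complex \<Rightarrow> 'g::ab_group_add \<Rightarrow> 'g) \<Rightarrow> ('g \<Rightarrow> 'g \<Rightarrow> 'g) \<Rightarrow> bool" where
  "simple_lie sc br \<longleftrightarrow> (\<exists>x y. br x y \<noteq> 0)
     \<and> (\<forall>I. lie_ideal sc br I \<longrightarrow> I = {0} \<or> I = UNIV)"

definition lie_subalgebra :: "(complex \<Rightarrow> 'g::ab_group_add \<Rightarrow> 'g) \<Rightarrow> ('g \<Rightarrow> 'g \<Rightarrow> 'g) \<Rightarrow> 'g set \<Rightarrow> bool" where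
  "lie_subalgebra sc br S \<longleftrightarrow> module.subspace sc S \<and> (\<forall>x\<in>S. \<forall>y\<in>S. br x y \<in> S)"

definition ad_semisimple :: "(complex \<Rightarrow> 'g::ab_group_add \<Rightarrow> 'g) \<Rightarrow> ('g \<Rightarrow> 'g \<Rightarrow> 'g) \<Rightarrow> 'g \<Rightarrow> bool" where
  "ad_semisimple sc br x \<longleftrightarrow> module.span sc {y. \<exists>c. br x y = sc c y} = UNIV"

definition toral :: "(complex \<Rightarrow> 'g::ab_group_add \<Rightarrow> 'g) \<Rightarrow> ('g \<Rightarrow> 'g \<Rightarrow> 'g) \<Rightarrow> 'g set \<Rightarrow> bool" where
  "toral sc br T \<longleftrightarrow> lie_subalgebra sc br T \<and> (\<forall>x\<in>T. ad_semisimple sc br x)"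

text \<open>Cartan subalgebra of a semisimple Lie algebra = maximal toral subalgebra.\<close>
definition cartan_subalgebra :: "(complex \<Rightarrow> 'g::ab_group_add \<Rightarrow> 'g) \<Rightarrow> ('g \<Rightarrow> 'g \<Rightarrow> 'g) \<Rightarrow> 'g set \<Rightarrow> bool" where
  "cartan_subalgebra sc br H \<longleftrightarrow> toral sc br H \<and> (\<forall>T. toral sc br T \<and> H \<subseteq> T \<longrightarrow> T = H)"

definition root_space :: "(complex \<Rightarrow> 'g::ab_group_add \<Rightarrow> 'g) \<Rightarrow> ('g \<Rightarrow> 'g \<Rightarrow> 'g) \<Rightarrow> 'g set \<Rightarrow> ('g \<Rightarrow> complex) \<Rightarrow> 'g set" where
  "root_space sc br H \<alpha> = {x. \<forall>h\<in>H. br h x = sc (\<alpha> h) x}"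

text \<open>Roots, represented as functionals on H extended by 0 outside H.\<close>
definition roots :: "(complex \<Rightarrow> 'g::ab_group_add \<Rightarrow> 'g) \<Rightarrow> ('g \<Rightarrow> 'g \<Rightarrow> 'g) \<Rightarrow> 'g set \<Rightarrow> ('g \<Rightarrow> complex) set" where
  "roots sc br H = {\<alpha>. (\<forall>h. h \<notin> H \<longrightarrow> \<alpha> h = 0) \<and> (\<exists>h\<in>H. \<alpha> h \<noteq> 0)
                      \<and> root_space sc br H \<alpha> \<noteq> {0}}"

definition simple_roots :: "(complex \<Rightarrow> 'g::ab_group_add \<Rightarrow> 'g) \<Rightarrow> ('g \<Rightarrow> 'g \<Rightarrow> 'g) \<Rightarrow> 'g set \<Rightarrow> ('g \<Rightarrow> complex) list \<Rightarrow> bool" where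
  "simple_roots sc br H al \<longleftrightarrow> distinct al \<and> set al \<subseteq> roots sc br H
     \<and> (\<forall>c::nat \<Rightarrow> complex. (\<forall>h\<in>H. (\<Sum>i<length al. c i * (al ! i) h) = 0) \<longrightarrow> (\<forall>i<length al. c i = 0))
     \<and> (\<forall>\<beta>\<in>roots sc br H. \<exists>k::nat \<Rightarrow> int.
          (\<forall>h\<in>H. \<beta> h = (\<Sum>i<length al. of_int (k i) * (al ! i) h))
          \<and> ((\<forall>i<length al. k i \<ge> 0) \<or> (\<forall>i<length al. k i \<le> 0)))"

definition is_coroot :: "(complex \<Rightarrow> 'g::ab_group_add \<Rightarrow> 'g) \<Rightarrow> ('g \<Rightarrow> 'g \<Rightarrow> 'g) \<Rightarrow> 'g set \<Rightarrow> ('g \<Rightarrow> complex) \<Rightarrow> 'g \<Rightarrow> bool" where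
  "is_coroot sc br H \<alpha> h \<longleftrightarrow> h \<in> H \<and> \<alpha> h = 2
     \<and> (\<exists>x y. x \<in> root_space sc br H \<alpha> \<and> y \<in> root_space sc br H (\<lambda>t. - \<alpha> t) \<and> h = br x y)"

definition lie_rep :: "(complex \<Rightarrow> 'g::ab_group_add \<Rightarrow> 'g) \<Rightarrow> ('g \<Rightarrow> 'g \<Rightarrow> 'g) \<Rightarrow> nat \<Rightarrow> ('g \<Rightarrow> complex mat) \<Rightarrow> bool" where
  "lie_rep sc br d \<phi> \<longleftrightarrow> (\<forall>x. \<phi> x \<in> carrier_mat d d)
     \<and> (\<forall>x y. \<phi> (x + y) = \<phi> x + \<phi> y)
     \<and> (\<forall>c x. \<phi> (sc c x) = c \<cdot>\<^sub>m \<phi> x)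
     \<and> (\<forall>x y. \<phi> (br x y) = \<phi> x * \<phi> y - \<phi> y * \<phi> x)"

text \<open>f~_phi(z_0,...,z_n) = det(z_0 I + sum_i z_i phi(h_i)), as a polynomial function of
 z :: nat => complex (only z 0, ..., z n matter); hs = [h_1,...,h_n].\<close>
definition char_poly_fun :: "'g list \<Rightarrow> nat \<Rightarrow> ('g \<Rightarrow> complex mat) \<Rightarrow> (nat \<Rightarrow> complex) \<Rightarrow> complex" where
  "char_poly_fun hs d \<phi> z = det (mat d d (\<lambda>(a, b).
      z 0 * (if a = b then 1 else 0) + (\<Sum>i<length hs. z (Suc i) * (\<phi> (hs ! i) $$ (a, b)))))"

definition CP :: "(complex \<Rightarrow> 'g::ab_group_add \<Rightarrow> 'g) \<Rightarrow> ('g \<Rightarrow> 'g \<Rightarrow> 'g) \<Rightarrow> 'g list \<Rightarrow> ((nat \<Rightarrow> complex) \<Rightarrow> complex) set" where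
  "CP sc br hs = {char_poly_fun hs d \<phi> | d \<phi>. lie_rep sc br d \<phi>}"

definition lin_prod :: "nat \<Rightarrow> complex list multiset \<Rightarrow> (nat \<Rightarrow> complex) \<Rightarrow> complex" where
  "lin_prod n M z = (\<Prod>c\<in>#M. z 0 + (\<Sum>i<n. c ! i * z (Suc i)))"

definition lin_factors :: "nat \<Rightarrow> ((nat \<Rightarrow> complex) \<Rightarrow> complex) \<Rightarrow> complex list multiset" where
  "lin_factors n F = (SOME M. (\<forall>c\<in>#M. length c = n) \<and> F = lin_prod n M)"

text \<open>Resolution product: prod over factors (lambda, mu) of z_0 + sum_i (lambda_i + mu_i) z_i,
 with multiplicities d_lambda d_mu.\<close>
definition res_prod :: "nat \<Rightarrow> ((nat \<Rightarrow> complex) \<Rightarrow> complex) \<Rightarrow> ((nat \<Rightarrow> complex) \<Rightarrow> complex) \<Rightarrow> (nat \<Rightarrow> complex) \<Rightarrow> complex" where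
  "res_prod n F G = lin_prod n (\<Sum>\<^sub># (image_mset (\<lambda>c. image_mset (\<lambda>e. map2 (+) c e) (lin_factors n G)) (lin_factors n F)))"

end

theory Submission
  imports Defs "Jordan_Normal_Form.Schur_Decomposition" "Jordan_Normal_Form.Matrix_Kernel"
    "Jordan_Normal_Form.Spectral_Radius" "HOL-Computational_Algebra.Polynomial"
begin

definition iterop :: "(complex \<Rightarrow> 'g::ab_group_add \<Rightarrow> 'g) \<Rightarrow> ('g \<Rightarrow> 'g) \<Rightarrow> complex list \<Rightarrow> 'g \<Rightarrow> 'g" where
  "iterop sc T ns v = foldr (\<lambda>\<nu> w. T w - sc \<nu> w) ns v"

lemma iterop_comb:
  fixes sc :: "complex \<Rightarrow> 'g::ab_group_add \<Rightarrow> 'g"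
  assumes V: "vector_space sc" and lin: "Vector_Spaces.linear sc sc T"
    and ev: "\<forall>\<mu>\<in>L. T (u \<mu>) = sc \<mu> (u \<mu>)"
  shows "iterop sc T ns (\<Sum>\<mu>\<in>L. sc (a \<mu>) (u \<mu>)) = (\<Sum>\<mu>\<in>L. sc (a \<mu> * prod_list (map (\<lambda>\<nu>. \<mu> - \<nu>) ns)) (u \<mu>))"
proof (induction ns)
  case Nil
  then show ?case by (simp add: iterop_def)
next
  case (Cons \<nu> ns)
  interpret V: vector_space sc by fact
  interpret L: Vector_Spaces.linear sc sc T by fact
  have "iterop sc T (\<nu> # ns) (\<Sum>\<mu>\<in>L. sc (a \<mu>) (u \<mu>))
      = T (\<Sum>\<mu>\<in>L. sc (a \<mu> * prod_list (map (\<lambda>\<nu>. \<mu> - \<nu>) ns)) (u \<mu>))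
        - sc \<nu> (\<Sum>\<mu>\<in>L. sc (a \<mu> * prod_list (map (\<lambda>\<nu>. \<mu> - \<nu>) ns)) (u \<mu>))"
    using Cons by (simp add: iterop_def)
  also have "\<dots> = (\<Sum>\<mu>\<in>L. sc (a \<mu> * prod_list (map (\<lambda>\<nu>. \<mu> - \<nu>) ns) * \<mu>) (u \<mu>))
        - (\<Sum>\<mu>\<in>L. sc (a \<mu> * prod_list (map (\<lambda>\<nu>. \<mu> - \<nu>) ns) * \<nu>) (u \<mu>))"
    using ev by (simp add: L.sum L.scale V.scale_sum_right V.scale_scale mult.commute)
  also have "\<dots> = (\<Sum>\<mu>\<in>L. sc (a \<mu> * prod_list (map (\<lambda>\<nu>. \<mu> - \<nu>) (\<nu> # ns))) (u \<mu>))"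
    by (simp add: algebra_simps V.scale_left_diff_distrib sum_subtractf)
  finally show ?case .
qed

lemma iterop_zero:
  fixes sc :: "complex \<Rightarrow> 'g::ab_group_add \<Rightarrow> 'g"
  assumes V: "vector_space sc" and lin: "Vector_Spaces.linear sc sc T"
  shows "iterop sc T ns 0 = 0"
proof -
  interpret V: vector_space sc by fact
  interpret L: Vector_Spaces.linear sc sc T by fact
  show ?thesis by (induction ns) (auto simp: iterop_def)
qed

lemma iterop_subspace:
  fixes sc :: "complex \<Rightarrow> 'g::ab_group_add \<Rightarrow> 'g"
  assumes V: "vector_space sc" and S: "Modules.module.subspace sc S" and inv: "\<forall>w\<in>S. T w \<in> S" and v: "v \<in> S"
  shows "iterop sc T ns v \<in> S"
proof -
  interpret V: vector_space sc by fact
  show ?thesis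
    by (induction ns) (auto simp: iterop_def v inv V.subspace_diff[OF S] V.subspace_scale[OF S])
qed

lemma eig_decomp:
  fixes sc :: "complex \<Rightarrow> 'g::ab_group_add \<Rightarrow> 'g"
  assumes V: "vector_space sc" and lin: "Vector_Spaces.linear sc sc T"
    and ss: "Modules.module.span sc {y. \<exists>c. T y = sc c y} = UNIV"
  shows "\<exists>L u. finite L \<and> (\<forall>\<mu>\<in>L. T (u \<mu>) = sc \<mu> (u \<mu>)) \<and> v = (\<Sum>\<mu>\<in>L. u \<mu>)"
proof -
  interpret V: vector_space sc by fact
  interpret L: Vector_Spaces.linear sc sc T by fact
  have "v \<in> V.span {y. \<exists>c. T y = sc c y}" using ss by simp
  then obtain t r where t: "finite t" "t \<subseteq> {y. \<exists>c. T y = sc c y}" and v: "v = (\<Sum>a\<in>t. sc (r a) a)"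
    unfolding V.span_explicit by auto
  from t(2) have "\<forall>y\<in>t. \<exists>c. T y = sc c y" by auto
  then obtain e where e: "\<forall>y\<in>t. T y = sc (e y) y" by metis
  define u where "u \<mu> = (\<Sum>y\<in>{y\<in>t. e y = \<mu>}. sc (r y) y)" for \<mu>
  have vs: "v = (\<Sum>\<mu>\<in>e ` t. u \<mu>)"
    unfolding v u_def using t(1) by (rule sum.image_gen)
  have evu: "T (u \<mu>) = sc \<mu> (u \<mu>)" for \<mu>
  proof -
    have "T (u \<mu>) = (\<Sum>y\<in>{y\<in>t. e y = \<mu>}. sc (r y) (T y))" by (simp add: u_def L.sum L.scale)
    also have "\<dots> = (\<Sum>y\<in>{y\<in>t. e y = \<mu>}. sc \<mu> (sc (r y) y))"
      by (rule sum.cong[OF refl]) (simp add: e V.scale_scale mult.commute)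
    also have "\<dots> = sc \<mu> (u \<mu>)" by (simp add: u_def V.scale_sum_right)
    finally show ?thesis .
  qed
  show ?thesis
    by (rule exI[of _ "e ` t"], rule exI[of _ u]) (simp add: t(1) evu vs)
qed

lemma proj_exists:
  fixes sc :: "complex \<Rightarrow> 'g::ab_group_add \<Rightarrow> 'g"
  assumes V: "vector_space sc" and lin: "Vector_Spaces.linear sc sc T"
    and fin: "finite L" and mu0: "\<mu>0 \<in> L" and ev: "\<forall>\<mu>\<in>L. T (u \<mu>) = sc \<mu> (u \<mu>)"
  shows "\<exists>ns c. c \<noteq> 0 \<and> (\<forall>a. iterop sc T ns (\<Sum>\<mu>\<in>L. sc (a \<mu>) (u \<mu>)) = sc (a \<mu>0 * c) (u \<mu>0))"
proof -
  interpret V: vector_space sc by fact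
  have "finite (L - {\<mu>0})" using fin by simp
  then obtain ns where ns: "set ns = L - {\<mu>0}" using finite_list by blast
  define c where "c = prod_list (map (\<lambda>\<nu>. \<mu>0 - \<nu>) ns)"
  have "(0::complex) \<notin> set (map (\<lambda>\<nu>. \<mu>0 - \<nu>) ns)"
  proof
    assume "(0::complex) \<in> set (map (\<lambda>\<nu>. \<mu>0 - \<nu>) ns)"
    then obtain \<nu> where "\<nu> \<in> set ns" "0 = \<mu>0 - \<nu>" by auto
    then show False using ns by simp
  qed
  then have c0: "c \<noteq> 0" unfolding c_def by (simp only: prod_list_zero_iff simp_thms) 
  have it: "iterop sc T ns (\<Sum>\<mu>\<in>L. sc (a \<mu>) (u \<mu>)) = sc (a \<mu>0 * c) (u \<mu>0)" for a
  proof -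
    have "iterop sc T ns (\<Sum>\<mu>\<in>L. sc (a \<mu>) (u \<mu>)) = (\<Sum>\<mu>\<in>L. sc (a \<mu> * prod_list (map (\<lambda>\<nu>. \<mu> - \<nu>) ns)) (u \<mu>))"
      by (rule iterop_comb[OF V lin ev])
    also have "\<dots> = sc (a \<mu>0 * prod_list (map (\<lambda>\<nu>. \<mu>0 - \<nu>) ns)) (u \<mu>0)
       + (\<Sum>\<mu>\<in>L - {\<mu>0}. sc (a \<mu> * prod_list (map (\<lambda>\<nu>. \<mu> - \<nu>) ns)) (u \<mu>))"
      by (rule sum.remove[OF fin mu0])
    also have "(\<Sum>\<mu>\<in>L - {\<mu>0}. sc (a \<mu> * prod_list (map (\<lambda>\<nu>. \<mu> - \<nu>) ns)) (u \<mu>)) = 0"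
    proof (rule sum.neutral, rule ballI)
      fix x assume x: "x \<in> L - {\<mu>0}"
      then have "x \<in> set ns" using ns by blast
      then have "(0::complex) \<in> set (map (\<lambda>\<nu>. x - \<nu>) ns)" by force
      then have "prod_list (map (\<lambda>\<nu>. x - \<nu>) ns) = 0" by (simp only: prod_list_zero_iff simp_thms)
      then show "sc (a x * prod_list (map (\<lambda>\<nu>. x - \<nu>) ns)) (u x) = 0" by simp
    qed
    finally show ?thesis unfolding c_def by simp
  qed
  show ?thesis by (rule exI[of _ ns], rule exI[of _ c]) (use c0 it in auto)
qed

lemma ker_sq:
  fixes sc :: "complex \<Rightarrow> 'g::ab_group_add \<Rightarrow> 'g"
  assumes V: "vector_space sc" and lin: "Vector_Spaces.linear sc sc T"
    and ss: "Modules.module.span sc {y. \<exists>c. T y = sc c y} = UNIV" and sq: "T (T v) = 0"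
  shows "T v = 0"
proof -
  interpret V: vector_space sc by fact
  interpret L: Vector_Spaces.linear sc sc T by fact
  obtain L u where fin: "finite L" and ev: "\<forall>\<mu>\<in>L. T (u \<mu>) = sc \<mu> (u \<mu>)" and v: "v = (\<Sum>\<mu>\<in>L. u \<mu>)"
    using eig_decomp[OF V lin ss] by blast
  have v': "v = (\<Sum>\<mu>\<in>L. sc 1 (u \<mu>))" using v by simp
  have Tv: "T v = (\<Sum>\<mu>\<in>L. sc \<mu> (u \<mu>))" using ev by (simp add: v L.sum)
  have TTv: "T (T v) = (\<Sum>\<mu>\<in>L. sc (\<mu> * \<mu>) (u \<mu>))" using ev
    by (simp add: Tv L.sum L.scale V.scale_scale mult.commute)
  have z: "u \<mu>0 = 0" if mu0: "\<mu>0 \<in> L" "\<mu>0 \<noteq> 0" for \<mu>0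
  proof -
    obtain ns c where c: "c \<noteq> 0" and it: "\<And>a. iterop sc T ns (\<Sum>\<mu>\<in>L. sc (a \<mu>) (u \<mu>)) = sc (a \<mu>0 * c) (u \<mu>0)"
      using proj_exists[OF V lin fin mu0(1) ev] by blast
    have "sc (\<mu>0 * \<mu>0 * c) (u \<mu>0) = iterop sc T ns (T (T v))"
      using it[of "\<lambda>\<mu>. \<mu> * \<mu>"] TTv by simp
    also have "\<dots> = 0" using sq iterop_zero[OF V lin] by simp
    finally show ?thesis using c mu0 by simp
  qed
  have "\<forall>\<mu>\<in>L. sc \<mu> (u \<mu>) = 0"
  proof
    fix \<mu> assume "\<mu> \<in> L"
    then show "sc \<mu> (u \<mu>) = 0" using z[of \<mu>] by (cases "\<mu> = 0") simp_all
  qed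
  then show ?thesis unfolding Tv by (rule sum.neutral)
qed


lemma toral_abelian:
  fixes sc :: "complex \<Rightarrow> 'g::ab_group_add \<Rightarrow> 'g"
  assumes L: "lie_algebra sc br" and T: "toral sc br H" and x: "x \<in> H" and y: "y \<in> H"
  shows "br x y = 0"
proof -
  have V: "vector_space sc" and linr: "\<And>a. Vector_Spaces.linear sc sc (br a)"
    and linl: "\<And>b. Vector_Spaces.linear sc sc (\<lambda>a. br a b)" and alt: "\<And>a. br a a = 0"
    using L unfolding lie_algebra_def by blast+
  interpret V: vector_space sc by fact
  have anti: "br a b = - br b a" for a b
  proof -
    interpret L1: Vector_Spaces.linear sc sc "br (a+b)" by (rule linr)
    interpret L2: Vector_Spaces.linear sc sc "\<lambda>x. br x a" by (rule linl)
    interpret L3: Vector_Spaces.linear sc sc "\<lambda>x. br x b" by (rule linl)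
    have "0 = br (a+b) (a+b)" by (simp only: alt)
    also have "\<dots> = br (a+b) a + br (a+b) b" by (rule L1.add)
    also have "br (a+b) a = br a a + br b a" by (rule L2.add)
    also have "br (a+b) b = br a b + br b b" by (rule L3.add)
    finally have "0 = br b a + br a b" by (simp add: alt)
    then show ?thesis by (simp add: eq_neg_iff_add_eq_0 add.commute)
  qed
  have sub: "Modules.module.subspace sc H" and clos: "\<forall>a\<in>H. \<forall>b\<in>H. br a b \<in> H"
    and ss: "\<forall>a\<in>H. Modules.module.span sc {y. \<exists>c. br a y = sc c y} = UNIV"
    using T unfolding toral_def lie_subalgebra_def ad_semisimple_def by blast+
  have ssx: "Modules.module.span sc {y. \<exists>c. br x y = sc c y} = UNIV" using ss x by blast
  obtain L u where fin: "finite L" and ev: "\<forall>\<mu>\<in>L. br x (u \<mu>) = sc \<mu> (u \<mu>)" and yu: "y = (\<Sum>\<mu>\<in>L. u \<mu>)"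
    using eig_decomp[OF V linr ssx] by blast
  have uH: "u \<mu> \<in> H" if mu: "\<mu> \<in> L" for \<mu>
  proof -
    obtain ns c where c: "c \<noteq> 0" and it: "\<forall>a. iterop sc (br x) ns (\<Sum>\<mu>\<in>L. sc (a \<mu>) (u \<mu>)) = sc (a \<mu> * c) (u \<mu>)"
      using proj_exists[OF V linr fin mu ev] by blast
    have "iterop sc (br x) ns y \<in> H"
      by (rule iterop_subspace[OF V sub]) (use clos x y in blast)+
    moreover have "iterop sc (br x) ns y = sc c (u \<mu>)"
      using it[rule_format, of "\<lambda>_. 1"] yu by simp
    ultimately have "sc c (u \<mu>) \<in> H" by simp
    then have "sc (inverse c) (sc c (u \<mu>)) \<in> H" by (rule V.subspace_scale[OF sub])
    then show ?thesis using c by (simp add: V.scale_scale)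
  qed
  have zero: "u \<mu> = 0" if mu: "\<mu> \<in> L" "\<mu> \<noteq> 0" for \<mu>
  proof -
    define w where "w = u \<mu>"
    have wH: "w \<in> H" using uH mu w_def by simp
    interpret Lw: Vector_Spaces.linear sc sc "br w" by (rule linr)
    have bwx: "br w x = - sc \<mu> w" using anti[of w x] ev mu w_def by simp
    have "br w (br w x) = - sc \<mu> (br w w)" by (simp add: bwx Lw.neg Lw.scale)
    then have "br w (br w x) = 0" by (simp add: alt)
    moreover have "Modules.module.span sc {y. \<exists>c. br w y = sc c y} = UNIV" using ss wH by blast
    ultimately have "br w x = 0" using ker_sq[OF V linr] by blast
    then show ?thesis using bwx mu(2) w_def by simp
  qed
  interpret Lx: Vector_Spaces.linear sc sc "br x" by (rule linr)
  have "br x y = (\<Sum>\<mu>\<in>L. sc \<mu> (u \<mu>))" using ev by (simp add: yu Lx.sum)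
  also have "\<dots> = 0"
  proof (rule sum.neutral, rule ballI)
    fix \<mu> assume "\<mu> \<in> L"
    then show "sc \<mu> (u \<mu>) = 0" using zero[of \<mu>] by (cases "\<mu> = 0") simp_all
  qed
  finally show ?thesis .
qed

lemma image_mset_inj_eq:
  assumes inj: "inj_on f (set_mset M \<union> set_mset N)" and eq: "image_mset f M = image_mset f N"
  shows "M = N"
proof -
  define g where "g = inv_into (set_mset M \<union> set_mset N) f"
  have "M = image_mset g (image_mset f M)"
  proof -
    have "image_mset g (image_mset f M) = image_mset (g \<circ> f) M" by (simp add: multiset.map_comp)
    also have "\<dots> = image_mset (\<lambda>x. x) M"
      by (rule image_mset_cong) (simp add: g_def inv_into_f_f[OF inj])
    finally show ?thesis by simp
  qed
  also have "\<dots> = image_mset g (image_mset f N)" using eq by simp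
  also have "\<dots> = N"
  proof -
    have "image_mset g (image_mset f N) = image_mset (g \<circ> f) N" by (simp add: multiset.map_comp)
    also have "\<dots> = image_mset (\<lambda>x. x) N"
      by (rule image_mset_cong) (simp add: g_def inv_into_f_f[OF inj])
    finally show ?thesis by simp
  qed
  finally show ?thesis .
qed

lemma prod_lin_inj:
  fixes A B :: "complex multiset"
  assumes "(\<Prod>a\<in>#A. [:a, 1:]) = (\<Prod>a\<in>#B. [:a, 1:])"
  shows "A = B"
  using assms
proof (induction A arbitrary: B)
  case empty
  show ?case
  proof (rule ccontr)
    assume "{#} \<noteq> B"
    then obtain b where b: "b \<in># B" by (metis multiset_nonemptyE)
    have "poly (\<Prod>a\<in>#B. [:a, 1:]) (-b) = (\<Prod>a\<in>#B. a + - b)" by (simp add: poly_prod_mset)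
    also have "\<dots> = 0" using b by (simp add: prod_mset_zero_iff)
    finally show False using empty by simp
  qed
next
  case (add a A)
  have "poly (\<Prod>a\<in>#B. [:a, 1:]) (-a) = 0"
    using add.prems[symmetric] by (simp add: poly_prod_mset)
  then have "(\<Prod>b\<in>#B. b + - a) = 0" by (simp add: poly_prod_mset)
  then obtain b where b: "b \<in># B" "b + - a = 0" by (auto simp: prod_mset_zero_iff)
  then have aB: "a \<in># B" by simp
  define B' where "B' = B - {#a#}"
  have B: "B = add_mset a B'" using aB unfolding B'_def by simp
  have "[:a, 1:] * (\<Prod>a\<in>#A. [:a, 1:]) = [:a, 1:] * (\<Prod>a\<in>#B'. [:a, 1:])"
    using add.prems unfolding B by simp
  moreover have nz: "[:a, 1:] \<noteq> (0::complex poly)" by simp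
  ultimately have "(\<Prod>a\<in>#A. [:a, 1:]) = (\<Prod>a\<in>#B'. [:a, 1:])" by (subst (asm) mult_left_cancel[OF nz])
  then have "A = B'" by (rule add.IH)
  then show ?case using B by simp
qed

lemma lin_prod_shift:
  fixes x t :: complex
  shows "lin_prod n M (\<lambda>k. if k = 0 then t else x ^ (k - 1))
    = poly (\<Prod>a\<in>#image_mset (\<lambda>c. \<Sum>i<n. c ! i * x ^ i) M. [:a, 1:]) t"
  unfolding lin_prod_def by (simp add: poly_prod_mset multiset.map_comp o_def add.commute)

lemma lin_prod_inj:
  assumes lM: "\<forall>c\<in>#M. length c = n" and lN: "\<forall>c\<in>#N. length c = n"
    and eq: "lin_prod n M = lin_prod n N"
  shows "M = N"
proof -
  define S where "S = set_mset M \<union> set_mset N"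
  have finS: "finite S" unfolding S_def by simp
  define q where "q c c' = (\<Sum>i<n. monom (c ! i - c' ! i) i)" for c c' :: "complex list"
  have qnz: "q c c' \<noteq> 0" if c: "c \<in> S" "c' \<in> S" "c \<noteq> c'" for c c'
  proof
    assume q0: "q c c' = 0"
    have "c ! i = c' ! i" if i: "i < n" for i
    proof -
      have "coeff (q c c') i = c ! i - c' ! i"
        unfolding q_def coeff_sum coeff_monom using i by (simp add: sum.delta)
      then show ?thesis using q0 by simp
    qed
    moreover have "length c = n" "length c' = n" using c lM lN unfolding S_def by auto
    ultimately have "c = c'" by (simp add: nth_equalityI)
    then show False using c by simp
  qed
  define R where "R = (\<Union>p\<in>{p\<in>S \<times> S. fst p \<noteq> snd p}. {x. poly (q (fst p) (snd p)) x = 0})"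
  have fin1: "finite {x. poly (q (fst p) (snd p)) x = 0}" if p: "p \<in> {p\<in>S \<times> S. fst p \<noteq> snd p}" for p
  proof -
    from p have "fst p \<in> S" "snd p \<in> S" "fst p \<noteq> snd p" by (cases p, simp)+
    then have "q (fst p) (snd p) \<noteq> 0" by (rule qnz)
    then show ?thesis by (rule poly_roots_finite)
  qed
  have finR: "finite R" unfolding R_def
    by (rule finite_UN_I) (use finS in simp, rule fin1)
  have "R \<noteq> UNIV" using finR infinite_UNIV_char_0 by auto
  then obtain x where x: "x \<notin> R" by auto
  define s where "s c = (\<Sum>i<n. c ! i * x ^ i)" for c :: "complex list"
  have sdiff: "s c - s c' = poly (q c c') x" for c c'
    unfolding s_def q_def poly_sum poly_monom by (simp add: sum_subtractf left_diff_distrib)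
  have inj: "inj_on s S"
  proof (rule inj_onI)
    fix c c' assume c: "c \<in> S" "c' \<in> S" "s c = s c'"
    show "c = c'"
    proof (rule ccontr)
      assume ne: "c \<noteq> c'"
      have "poly (q c c') x = 0" using sdiff[of c c'] c(3) by simp
      then have "x \<in> R" unfolding R_def
        by (intro UN_I[of "(c, c')"]) (use c ne in simp_all)
      with x show False by simp
    qed
  qed
  have "poly (\<Prod>a\<in>#image_mset s M. [:a, 1:]) t = poly (\<Prod>a\<in>#image_mset s N. [:a, 1:]) t" for t
    using lin_prod_shift[of n M t x] lin_prod_shift[of n N t x] eq unfolding s_def by simp
  then have "(\<Prod>a\<in>#image_mset s M. [:a, 1:]) = (\<Prod>a\<in>#image_mset s N. [:a, 1:])"
    by (simp add: poly_eq_poly_eq_iff[symmetric] fun_eq_iff)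
  then have "image_mset s M = image_mset s N" by (rule prod_lin_inj)
  then show ?thesis by (rule image_mset_inj_eq[OF inj[unfolded S_def]])
qed

lemma lin_factors_eq:
  assumes "\<forall>c\<in>#M. length c = n"
  shows "lin_factors n (lin_prod n M) = M"
proof -
  have ex: "\<exists>M'. (\<forall>c\<in>#M'. length c = n) \<and> lin_prod n M = lin_prod n M'" using assms by blast
  have "(\<forall>c\<in>#lin_factors n (lin_prod n M). length c = n) \<and> lin_prod n M = lin_prod n (lin_factors n (lin_prod n M))"
    unfolding lin_factors_def by (rule someI_ex[OF ex])
  then show ?thesis using lin_prod_inj[OF assms] by metis
qed

definition mink :: "complex list multiset \<Rightarrow> complex list multiset \<Rightarrow> complex list multiset" where
  "mink M N = \<Sum>\<^sub># (image_mset (\<lambda>c. image_mset (\<lambda>e. map2 (+) c e) N) M)"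

lemma res_prod_mink: "res_prod n F G = lin_prod n (mink (lin_factors n F) (lin_factors n G))"
  unfolding res_prod_def mink_def ..

lemma prod_mset_sum_mset:
  "prod_mset (image_mset f (\<Sum>\<^sub># (image_mset g M))) = (\<Prod>c\<in>#M. prod_mset (image_mset f (g c)))"
  by (induction M) auto

lemma lin_prod_mink:
  "lin_prod n (mink M N) z = (\<Prod>c\<in>#M. \<Prod>e\<in>#N. z 0 + (\<Sum>i<n. map2 (+) c e ! i * z (Suc i)))"
  unfolding lin_prod_def mink_def prod_mset_sum_mset by (simp add: multiset.map_comp o_def)

lemma prod_mset_swap:
  "(\<Prod>a\<in>#A. \<Prod>b\<in>#B. f a b) = (\<Prod>b\<in>#B. \<Prod>a\<in>#A. (f a b :: complex))"
  by (induction A) (auto simp: prod_mset.distrib)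

lemma mink_len:
  assumes "\<forall>c\<in>#M. length c = n" "\<forall>c\<in>#N. length c = n"
  shows "\<forall>c\<in>#mink M N. length c = n"
  using assms unfolding mink_def by auto

lemma map2_assoc: "map2 (+) (map2 (+) a b) c = map2 (+) a (map2 (+) b (c :: complex list))"
  by (rule nth_equalityI) (auto simp: add.assoc)

lemma map2_comm: "map2 (+) a b = map2 (+) b (a :: complex list)"
  by (rule nth_equalityI) (auto simp: add.commute)

lemma map2_zero_left: "length e = n \<Longrightarrow> map2 (+) (replicate n 0) e = (e :: complex list)"
  by (rule nth_equalityI) auto

lemma map2_zero_right: "length e = n \<Longrightarrow> map2 (+) e (replicate n 0) = (e :: complex list)"
  by (rule nth_equalityI) auto

lemma lin_prod_one: "lin_prod n {#replicate n 0#} = (\<lambda>z. z 0)"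
  unfolding lin_prod_def by (auto simp: fun_eq_iff)

definition wts :: "'g list \<Rightarrow> nat \<Rightarrow> ('g \<Rightarrow> complex mat) \<Rightarrow> complex list multiset" where
  "wts hs d \<phi> = mset (map (\<lambda>a. map (\<lambda>i. \<phi> (hs ! i) $$ (a, a)) [0..<length hs]) [0..<d])"

lemma prod_list_map_upt: "prod_list (map f [0..<n]) = (\<Prod>a<n. (f a :: 'a :: comm_monoid_mult))"
  by (induction n) (simp_all add: lessThan_Suc mult.commute)

lemma lin_prod_wts:
  "lin_prod (length hs) (wts hs d \<phi>) z
     = (\<Prod>a<d. z 0 + (\<Sum>i<length hs. \<phi> (hs ! i) $$ (a, a) * z (Suc i)))"
proof -
  have "lin_prod (length hs) (wts hs d \<phi>) z
      = prod_list (map (\<lambda>c. z 0 + (\<Sum>i<length hs. c ! i * z (Suc i)))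
          (map (\<lambda>a. map (\<lambda>i. \<phi> (hs ! i) $$ (a, a)) [0..<length hs]) [0..<d]))"
    unfolding lin_prod_def wts_def by (simp only: mset_map[symmetric] prod_mset_prod_list)
  also have "\<dots> = (\<Prod>a<d. z 0 + (\<Sum>i<length hs. map (\<lambda>i. \<phi> (hs ! i) $$ (a, a)) [0..<length hs] ! i * z (Suc i)))"
    by (simp only: map_map o_def prod_list_map_upt)
  also have "\<dots> = (\<Prod>a<d. z 0 + (\<Sum>i<length hs. \<phi> (hs ! i) $$ (a, a) * z (Suc i)))"
    by (intro prod.cong refl arg_cong2[where f="(+)"] sum.cong) simp_all
  finally show ?thesis .
qed

lemma char_poly_fun_tri:
  assumes car: "\<forall>i<length hs. \<phi> (hs ! i) \<in> carrier_mat d d"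
    and ut: "\<forall>i<length hs. upper_triangular (\<phi> (hs ! i))"
  shows "char_poly_fun hs d \<phi> = lin_prod (length hs) (wts hs d \<phi>)"
proof
  fix z
  define X where "X = mat d d (\<lambda>(a, b).
      z 0 * (if a = b then 1 else 0) + (\<Sum>i<length hs. z (Suc i) * (\<phi> (hs ! i) $$ (a, b))))"
  have X: "X \<in> carrier_mat d d" unfolding X_def by simp
  have utX: "upper_triangular X"
    unfolding upper_triangular_def
  proof (intro allI impI)
    fix a b assume a: "a < dim_row X" and b: "b < a"
    have "\<phi> (hs ! i) $$ (a, b) = 0" if i: "i < length hs" for i
      using ut i car a b X unfolding upper_triangular_def by fastforce
    then show "X $$ (a, b) = 0" using a b X unfolding X_def by simp
  qed
  have "char_poly_fun hs d \<phi> z = det X" unfolding char_poly_fun_def X_def ..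
  also have "\<dots> = prod_list (diag_mat X)" by (rule det_upper_triangular[OF utX X])
  also have "\<dots> = (\<Prod>a<d. z 0 + (\<Sum>i<length hs. \<phi> (hs ! i) $$ (a, a) * z (Suc i)))"
    unfolding diag_mat_def using X by (simp add: prod_list_map_upt X_def mult.commute)
  also have "\<dots> = lin_prod (length hs) (wts hs d \<phi>) z" by (rule lin_prod_wts[symmetric])
  finally show "char_poly_fun hs d \<phi> z = lin_prod (length hs) (wts hs d \<phi>) z" .
qed

lemma bij_pair_index:
  "bij_betw (\<lambda>(a, b). a * e + b) ({..<d} \<times> {..<e}) {..<d * (e::nat)}"
proof (rule bij_betwI')
  fix x y assume x: "x \<in> {..<d} \<times> {..<e}" and y: "y \<in> {..<d} \<times> {..<e}"
  obtain a b where xab: "x = (a, b)" by (cases x)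
  obtain a' b' where yab: "y = (a', b')" by (cases y)
  have b: "b < e" "b' < e" using x y xab yab by auto
  show "((case x of (a, b) \<Rightarrow> a * e + b) = (case y of (a, b) \<Rightarrow> a * e + b)) = (x = y)"
  proof
    assume eq: "(case x of (a, b) \<Rightarrow> a * e + b) = (case y of (a, b) \<Rightarrow> a * e + b)"
    then have eq': "a * e + b = a' * e + b'" using xab yab by simp
    have "(a * e + b) div e = a" "(a * e + b) mod e = b" using b by auto
    moreover have "(a' * e + b') div e = a'" "(a' * e + b') mod e = b'" using b by auto
    ultimately show "x = y" using eq' xab yab by metis
  qed simp
next
  fix x assume x: "x \<in> {..<d} \<times> {..<e}"
  obtain a b where xab: "x = (a, b)" by (cases x)
  have "a * e + b < d * e"
  proof -
    have "a + 1 \<le> d" using x xab by auto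
    then have "(a + 1) * e \<le> d * e" by (rule mult_right_mono) simp
    then show ?thesis using x xab by (auto simp: algebra_simps)
  qed
  then show "(case x of (a, b) \<Rightarrow> a * e + b) \<in> {..<d * e}" using xab by simp
next
  fix q assume q: "q \<in> {..<d * e}"
  then have e: "e > 0" by (cases e) auto
  have "q div e < d" using q by (simp add: less_mult_imp_div_less)
  moreover have "q mod e < e" using e by simp
  moreover have "q = (q div e) * e + q mod e" by simp
  ultimately show "\<exists>x\<in>{..<d} \<times> {..<e}. q = (case x of (a, b) \<Rightarrow> a * e + b)"
    by (intro bexI[of _ "(q div e, q mod e)"]) simp_all
qed

lemma prod_pair_index: "(\<Prod>q<(d::nat) * (e::nat). f q) = (\<Prod>a<d. \<Prod>b<e. (f (a * e + b) :: 'a :: comm_monoid_mult))"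
proof -
  have "(\<Prod>q<d * e. f q) = (\<Prod>x\<in>{..<d} \<times> {..<e}. f ((\<lambda>(a, b). a * e + b) x))"
    using prod.reindex_bij_betw[OF bij_pair_index[of e d], of f] by simp
  also have "\<dots> = (\<Prod>a<d. \<Prod>b<e. f (a * e + b))"
    by (simp add: prod.cartesian_product split_def)
  finally show ?thesis .
qed

lemma sum_pair_index: "(\<Sum>q<(d::nat) * (e::nat). f q) = (\<Sum>a<d. \<Sum>b<e. (f (a * e + b) :: 'a :: comm_monoid_add))"
proof -
  have "(\<Sum>q<d * e. f q) = (\<Sum>x\<in>{..<d} \<times> {..<e}. f ((\<lambda>(a, b). a * e + b) x))"
    using sum.reindex_bij_betw[OF bij_pair_index[of e d], of f] by simp
  also have "\<dots> = (\<Sum>a<d. \<Sum>b<e. f (a * e + b))"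
    by (simp add: sum.cartesian_product split_def)
  finally show ?thesis .
qed


definition kron :: "nat \<Rightarrow> nat \<Rightarrow> complex mat \<Rightarrow> complex mat \<Rightarrow> complex mat" where
  "kron d e X Y = mat (d * e) (d * e) (\<lambda>(p, q). X $$ (p div e, q div e) * Y $$ (p mod e, q mod e))"

lemma kron_carrier[simp]: "kron d e X Y \<in> carrier_mat (d * e) (d * e)"
  unfolding kron_def by simp

lemma kron_dims[simp]: "dim_row (kron d e X Y) = d * e" "dim_col (kron d e X Y) = d * e"
  unfolding kron_def by simp_all

lemma pair_index_bounds:
  assumes "p < d * (e::nat)"
  shows "p div e < d" "p mod e < e" "e > 0"
proof -
  show e: "e > 0" using assms by (cases e) auto
  show "p div e < d" using assms by (simp add: less_mult_imp_div_less)
  show "p mod e < e" using e by simp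
qed

lemma kron_entry:
  assumes "p < d * e" "q < d * e"
  shows "kron d e X Y $$ (p, q) = X $$ (p div e, q div e) * Y $$ (p mod e, q mod e)"
  unfolding kron_def using assms by simp

lemma kron_mult:
  assumes X: "X \<in> carrier_mat d d" "X' \<in> carrier_mat d d" and Y: "Y \<in> carrier_mat e e" "Y' \<in> carrier_mat e e"
    and p: "p < d * e" and r: "r < d * e"
  shows "(kron d e X Y * kron d e X' Y') $$ (p, r)
     = (X * X') $$ (p div e, r div e) * (Y * Y') $$ (p mod e, r mod e)"
proof -
  note pb = pair_index_bounds[OF p] and rb = pair_index_bounds[OF r]
  have "(kron d e X Y * kron d e X' Y') $$ (p, r)
      = (\<Sum>q<d * e. kron d e X Y $$ (p, q) * kron d e X' Y' $$ (q, r))"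
    using p r by (simp add: index_mult_mat scalar_prod_def atLeast0LessThan row_def col_def)
  also have "\<dots> = (\<Sum>a<d. \<Sum>b<e. kron d e X Y $$ (p, a * e + b) * kron d e X' Y' $$ (a * e + b, r))"
    by (rule sum_pair_index)
  also have "\<dots> = (\<Sum>a<d. \<Sum>b<e. (X $$ (p div e, a) * X' $$ (a, r div e)) * (Y $$ (p mod e, b) * Y' $$ (b, r mod e)))"
  proof (intro sum.cong refl)
    fix a b assume a: "a \<in> {..<d}" and b: "b \<in> {..<e}"
    have ab: "a * e + b < d * e" using bij_betwE[OF bij_pair_index[of e d]] a b by auto
    have "(a * e + b) div e = a" "(a * e + b) mod e = b" using b by auto
    then show "kron d e X Y $$ (p, a * e + b) * kron d e X' Y' $$ (a * e + b, r)
      = (X $$ (p div e, a) * X' $$ (a, r div e)) * (Y $$ (p mod e, b) * Y' $$ (b, r mod e))"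
      using kron_entry[OF p ab] kron_entry[OF ab r] by (simp add: ac_simps)
  qed
  also have "\<dots> = (\<Sum>a<d. X $$ (p div e, a) * X' $$ (a, r div e)) * (\<Sum>b<e. Y $$ (p mod e, b) * Y' $$ (b, r mod e))"
    by (simp add: sum_product)
  also have "\<dots> = (X * X') $$ (p div e, r div e) * (Y * Y') $$ (p mod e, r mod e)"
    using X Y pb rb by (simp add: index_mult_mat scalar_prod_def atLeast0LessThan row_def col_def)
  finally show ?thesis .
qed

definition ksum :: "nat \<Rightarrow> nat \<Rightarrow> complex mat \<Rightarrow> complex mat \<Rightarrow> complex mat" where
  "ksum d e A B = kron d e A (1\<^sub>m e) + kron d e (1\<^sub>m d) B"

lemma ksum_carrier[simp]: "ksum d e A B \<in> carrier_mat (d * e) (d * e)"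
  unfolding ksum_def by simp

lemma ksum_dims[simp]: "dim_row (ksum d e A B) = d * e" "dim_col (ksum d e A B) = d * e"
  unfolding ksum_def by simp_all

lemma ksum_entry:
  assumes A: "A \<in> carrier_mat d d" and B: "B \<in> carrier_mat e e" and p: "p < d * e" and q: "q < d * e"
  shows "ksum d e A B $$ (p, q) = A $$ (p div e, q div e) * (if p mod e = q mod e then 1 else 0)
     + (if p div e = q div e then 1 else 0) * B $$ (p mod e, q mod e)"
  using pair_index_bounds[OF p] pair_index_bounds[OF q] p q
  unfolding ksum_def by (simp add: kron_entry)

lemma ksum_mult_entry:
  assumes A: "A \<in> carrier_mat d d" "A' \<in> carrier_mat d d" and B: "B \<in> carrier_mat e e" "B' \<in> carrier_mat e e"
    and p: "p < d * e" and r: "r < d * e"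
  shows "(ksum d e A B * ksum d e A' B') $$ (p, r)
     = (A * A') $$ (p div e, r div e) * (if p mod e = r mod e then 1 else 0)
     + A $$ (p div e, r div e) * B' $$ (p mod e, r mod e)
     + A' $$ (p div e, r div e) * B $$ (p mod e, r mod e)
     + (if p div e = r div e then 1 else 0) * (B * B') $$ (p mod e, r mod e)"
proof -
  note pb = pair_index_bounds[OF p] and rb = pair_index_bounds[OF r]
  let ?K1 = "kron d e A (1\<^sub>m e)" and ?K2 = "kron d e (1\<^sub>m d) B"
  let ?K1' = "kron d e A' (1\<^sub>m e)" and ?K2' = "kron d e (1\<^sub>m d) B'"
  have c: "?K1 \<in> carrier_mat (d*e) (d*e)" "?K2 \<in> carrier_mat (d*e) (d*e)"
    "?K1' \<in> carrier_mat (d*e) (d*e)" "?K2' \<in> carrier_mat (d*e) (d*e)" by simp_all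
  have "ksum d e A B * ksum d e A' B' = (?K1 * ?K1' + ?K1 * ?K2') + (?K2 * ?K1' + ?K2 * ?K2')"
  proof -
    have "ksum d e A B * ksum d e A' B' = ?K1 * (?K1' + ?K2') + ?K2 * (?K1' + ?K2')"
      unfolding ksum_def by (rule add_mult_distrib_mat[OF c(1) c(2) add_carrier_mat[OF c(4)]])
    also have "?K1 * (?K1' + ?K2') = ?K1 * ?K1' + ?K1 * ?K2'"
      by (rule mult_add_distrib_mat[OF c(1) c(3) c(4)])
    also have "?K2 * (?K1' + ?K2') = ?K2 * ?K1' + ?K2 * ?K2'"
      by (rule mult_add_distrib_mat[OF c(2) c(3) c(4)])
    finally show ?thesis .
  qed
  then have "(ksum d e A B * ksum d e A' B') $$ (p, r)
     = (?K1 * ?K1') $$ (p, r) + (?K1 * ?K2') $$ (p, r) + ((?K2 * ?K1') $$ (p, r) + (?K2 * ?K2') $$ (p, r))"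
    using p r by simp
  also have "\<dots> = (A * A') $$ (p div e, r div e) * (if p mod e = r mod e then 1 else 0)
     + A $$ (p div e, r div e) * B' $$ (p mod e, r mod e)
     + (A' $$ (p div e, r div e) * B $$ (p mod e, r mod e)
     + (if p div e = r div e then 1 else 0) * (B * B') $$ (p mod e, r mod e))"
    using A B pb rb
    by (simp add: kron_mult[OF _ _ _ _ p r] mult.commute)
  finally show ?thesis by (simp add: ac_simps)
qed

lemma ksum_rep:
  assumes \<phi>: "lie_rep sc br d \<phi>" and \<psi>: "lie_rep sc br e \<psi>"
  shows "lie_rep sc br (d * e) (\<lambda>x. ksum d e (\<phi> x) (\<psi> x))"
proof -
  have c\<phi>: "\<And>x. \<phi> x \<in> carrier_mat d d" and a\<phi>: "\<And>x y. \<phi> (x + y) = \<phi> x + \<phi> y"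
    and s\<phi>: "\<And>c x. \<phi> (sc c x) = c \<cdot>\<^sub>m \<phi> x" and b\<phi>: "\<And>x y. \<phi> (br x y) = \<phi> x * \<phi> y - \<phi> y * \<phi> x"
    using \<phi> unfolding lie_rep_def by blast+
  have c\<psi>: "\<And>x. \<psi> x \<in> carrier_mat e e" and a\<psi>: "\<And>x y. \<psi> (x + y) = \<psi> x + \<psi> y"
    and s\<psi>: "\<And>c x. \<psi> (sc c x) = c \<cdot>\<^sub>m \<psi> x" and b\<psi>: "\<And>x y. \<psi> (br x y) = \<psi> x * \<psi> y - \<psi> y * \<psi> x"
    using \<psi> unfolding lie_rep_def by blast+
  show ?thesis unfolding lie_rep_def
  proof (intro conjI allI)
    fix x show "ksum d e (\<phi> x) (\<psi> x) \<in> carrier_mat (d * e) (d * e)" by simp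
  next
    fix x y
    show "ksum d e (\<phi> (x + y)) (\<psi> (x + y)) = ksum d e (\<phi> x) (\<psi> x) + ksum d e (\<phi> y) (\<psi> y)"
    proof (rule eq_matI)
      fix p q assume p: "p < dim_row (ksum d e (\<phi> x) (\<psi> x) + ksum d e (\<phi> y) (\<psi> y))"
        and q: "q < dim_col (ksum d e (\<phi> x) (\<psi> x) + ksum d e (\<phi> y) (\<psi> y))"
      then have p': "p < d * e" and q': "q < d * e" by simp_all
      note pb = pair_index_bounds[OF p'] and qb = pair_index_bounds[OF q']
      show "ksum d e (\<phi> (x + y)) (\<psi> (x + y)) $$ (p, q) = (ksum d e (\<phi> x) (\<psi> x) + ksum d e (\<phi> y) (\<psi> y)) $$ (p, q)"
        unfolding a\<phi> a\<psi>
        using c\<phi>[of x] c\<phi>[of y] c\<psi>[of x] c\<psi>[of y] pb qb p' q'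
        by (simp add: ksum_entry[OF add_carrier_mat[OF c\<phi>] add_carrier_mat[OF c\<psi>] p' q']
            ksum_entry[OF c\<phi> c\<psi> p' q'] algebra_simps)
    qed simp_all
  next
    fix c x
    show "ksum d e (\<phi> (sc c x)) (\<psi> (sc c x)) = c \<cdot>\<^sub>m ksum d e (\<phi> x) (\<psi> x)"
    proof (rule eq_matI)
      fix p q assume p: "p < dim_row (c \<cdot>\<^sub>m ksum d e (\<phi> x) (\<psi> x))"
        and q: "q < dim_col (c \<cdot>\<^sub>m ksum d e (\<phi> x) (\<psi> x))"
      then have p': "p < d * e" and q': "q < d * e" by simp_all
      note pb = pair_index_bounds[OF p'] and qb = pair_index_bounds[OF q']
      show "ksum d e (\<phi> (sc c x)) (\<psi> (sc c x)) $$ (p, q) = (c \<cdot>\<^sub>m ksum d e (\<phi> x) (\<psi> x)) $$ (p, q)"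
        unfolding s\<phi> s\<psi>
        using c\<phi>[of x] c\<psi>[of x] pb qb p' q'
        by (simp add: ksum_entry[OF smult_carrier_mat[OF c\<phi>] smult_carrier_mat[OF c\<psi>] p' q']
            ksum_entry[OF c\<phi> c\<psi> p' q'] algebra_simps)
    qed simp_all
  next
    fix x y
    show "ksum d e (\<phi> (br x y)) (\<psi> (br x y))
      = ksum d e (\<phi> x) (\<psi> x) * ksum d e (\<phi> y) (\<psi> y) - ksum d e (\<phi> y) (\<psi> y) * ksum d e (\<phi> x) (\<psi> x)"
    proof (rule eq_matI)
      fix p q assume p: "p < dim_row (ksum d e (\<phi> x) (\<psi> x) * ksum d e (\<phi> y) (\<psi> y) - ksum d e (\<phi> y) (\<psi> y) * ksum d e (\<phi> x) (\<psi> x))"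
        and q: "q < dim_col (ksum d e (\<phi> x) (\<psi> x) * ksum d e (\<phi> y) (\<psi> y) - ksum d e (\<phi> y) (\<psi> y) * ksum d e (\<phi> x) (\<psi> x))"
      then have p': "p < d * e" and q': "q < d * e" by simp_all
      note pb = pair_index_bounds[OF p'] and qb = pair_index_bounds[OF q']
      have cb\<phi>: "\<phi> x * \<phi> y - \<phi> y * \<phi> x \<in> carrier_mat d d" using c\<phi>[of x] c\<phi>[of y] by auto
      have cb\<psi>: "\<psi> x * \<psi> y - \<psi> y * \<psi> x \<in> carrier_mat e e" using c\<psi>[of x] c\<psi>[of y] by auto
      note m1 = ksum_mult_entry[OF c\<phi>[of x] c\<phi>[of y] c\<psi>[of x] c\<psi>[of y] p' q']
      note m2 = ksum_mult_entry[OF c\<phi>[of y] c\<phi>[of x] c\<psi>[of y] c\<psi>[of x] p' q']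
      have "(ksum d e (\<phi> x) (\<psi> x) * ksum d e (\<phi> y) (\<psi> y) - ksum d e (\<phi> y) (\<psi> y) * ksum d e (\<phi> x) (\<psi> x)) $$ (p, q)
        = (ksum d e (\<phi> x) (\<psi> x) * ksum d e (\<phi> y) (\<psi> y)) $$ (p, q) - (ksum d e (\<phi> y) (\<psi> y) * ksum d e (\<phi> x) (\<psi> x)) $$ (p, q)"
        using p' q' by simp
      also have "\<dots> = ksum d e (\<phi> (br x y)) (\<psi> (br x y)) $$ (p, q)"
        unfolding m1 m2 b\<phi> b\<psi> ksum_entry[OF cb\<phi> cb\<psi> p' q']
        using c\<phi>[of x] c\<phi>[of y] c\<psi>[of x] c\<psi>[of y] pb qb
        by (simp add: algebra_simps)
      finally show "ksum d e (\<phi> (br x y)) (\<psi> (br x y)) $$ (p, q)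
        = (ksum d e (\<phi> x) (\<psi> x) * ksum d e (\<phi> y) (\<psi> y) - ksum d e (\<phi> y) (\<psi> y) * ksum d e (\<phi> x) (\<psi> x)) $$ (p, q)" by simp
    qed simp_all
  qed
qed

lemma ksum_ut:
  assumes A: "A \<in> carrier_mat d d" and B: "B \<in> carrier_mat e e"
    and uA: "upper_triangular A" and uB: "upper_triangular B"
  shows "upper_triangular (ksum d e A B)"
  unfolding upper_triangular_def
proof (intro allI impI)
  fix p q assume p: "p < dim_row (ksum d e A B)" and qp: "q < p"
  then have p': "p < d * e" by simp
  then have q': "q < d * e" using qp by simp
  note pb = pair_index_bounds[OF p'] and qb = pair_index_bounds[OF q']
  have le: "q div e \<le> p div e" using qp by (simp add: div_le_mono)
  have A0: "A $$ (p div e, q div e) = 0" if "q div e < p div e"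
    using uA that A pb unfolding upper_triangular_def by simp
  have B0: "B $$ (p mod e, q mod e) = 0" if "q mod e < p mod e"
    using uB that B pb unfolding upper_triangular_def by simp
  have "p div e \<noteq> q div e \<or> p mod e \<noteq> q mod e"
    using qp by (metis div_mult_mod_eq less_irrefl)
  moreover have "p div e = q div e \<Longrightarrow> q mod e < p mod e"
    using qp by (metis add_less_cancel_left div_mult_mod_eq linorder_neqE_nat not_less_iff_gr_or_eq)
  ultimately show "ksum d e A B $$ (p, q) = 0"
    unfolding ksum_entry[OF A B p' q'] using le A0 B0 by (cases "p div e = q div e") auto
qed

lemma prod_mset_mset_upt: "(\<Prod>c\<in>#mset (map g [0..<d]). f c) = (\<Prod>a<d. (f (g a) :: complex))"
  by (simp only: mset_map[symmetric] prod_mset_prod_list map_map o_def prod_list_map_upt)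

lemma wts_ksum:
  assumes c\<phi>: "\<forall>i<length hs. \<phi> (hs ! i) \<in> carrier_mat d d" and c\<psi>: "\<forall>i<length hs. \<psi> (hs ! i) \<in> carrier_mat e e"
  shows "lin_prod (length hs) (wts hs (d * e) (\<lambda>x. ksum d e (\<phi> x) (\<psi> x)))
       = lin_prod (length hs) (mink (wts hs d \<phi>) (wts hs e \<psi>))"
proof
  fix z
  let ?n = "length hs"
  have "lin_prod ?n (wts hs (d * e) (\<lambda>x. ksum d e (\<phi> x) (\<psi> x))) z
     = (\<Prod>p<d * e. z 0 + (\<Sum>i<?n. ksum d e (\<phi> (hs ! i)) (\<psi> (hs ! i)) $$ (p, p) * z (Suc i)))"
    by (rule lin_prod_wts)
  also have "\<dots> = (\<Prod>a<d. \<Prod>b<e. z 0 + (\<Sum>i<?n. ksum d e (\<phi> (hs ! i)) (\<psi> (hs ! i)) $$ (a * e + b, a * e + b) * z (Suc i)))"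
    by (rule prod_pair_index)
  also have "\<dots> = (\<Prod>a<d. \<Prod>b<e. z 0 + (\<Sum>i<?n. (\<phi> (hs ! i) $$ (a, a) + \<psi> (hs ! i) $$ (b, b)) * z (Suc i)))"
  proof (intro prod.cong refl arg_cong2[where f="(+)"] sum.cong)
    fix a b i assume a: "a \<in> {..<d}" and b: "b \<in> {..<e}" and i: "i \<in> {..<?n}"
    have ab: "a * e + b < d * e" using bij_betwE[OF bij_pair_index[of e d]] a b by auto
    have "(a * e + b) div e = a" "(a * e + b) mod e = b" using b by auto
    then show "ksum d e (\<phi> (hs ! i)) (\<psi> (hs ! i)) $$ (a * e + b, a * e + b) * z (Suc i)
      = (\<phi> (hs ! i) $$ (a, a) + \<psi> (hs ! i) $$ (b, b)) * z (Suc i)"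
      using ksum_entry[OF c\<phi>[rule_format] c\<psi>[rule_format] ab ab] i by simp
  qed
  also have "\<dots> = lin_prod ?n (mink (wts hs d \<phi>) (wts hs e \<psi>)) z"
    unfolding lin_prod_mink wts_def prod_mset_mset_upt
    by (intro prod.cong refl arg_cong2[where f="(+)"] sum.cong) (simp add: algebra_simps)
  finally show "lin_prod ?n (wts hs (d * e) (\<lambda>x. ksum d e (\<phi> x) (\<psi> x))) z = lin_prod ?n (mink (wts hs d \<phi>) (wts hs e \<psi>)) z" .
qed

lemma vec_minus_zero_eq:
  fixes a b :: "complex vec"
  assumes "a \<in> carrier_vec n" "b \<in> carrier_vec n" "a - b = 0\<^sub>v n"
  shows "a = b"
proof (rule eq_vecI)
  fix i assume i: "i < dim_vec b"
  have i': "i < n" using assms i by simp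
  have "(a - b) $ i = 0" using assms(3) i' by simp
  moreover have "(a - b) $ i = a $ i - b $ i" using assms(2) i' by simp
  ultimately show "a $ i = b $ i" by simp
qed (use assms in simp)

lemma mat_mult_left_inj:
  fixes K X Y :: "complex mat"
  assumes K: "K \<in> carrier_mat n m" and inj: "\<forall>c\<in>carrier_vec m. K *\<^sub>v c = 0\<^sub>v n \<longrightarrow> c = 0\<^sub>v m"
    and X: "X \<in> carrier_mat m k" and Y: "Y \<in> carrier_mat m k" and eq: "K * X = K * Y"
  shows "X = Y"
proof (rule mat_col_eqI)
  fix j assume j: "j < dim_col Y"
  then have j': "j < k" using Y by simp
  have cX: "col X j \<in> carrier_vec m" and cY: "col Y j \<in> carrier_vec m" using X Y j' by auto
  have "K *\<^sub>v col X j = K *\<^sub>v col Y j" using col_mult2[OF K X j'] col_mult2[OF K Y j'] eq by simp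
  then have "K *\<^sub>v (col X j - col Y j) = 0\<^sub>v n" using K cX cY by (simp add: mult_minus_distrib_mat_vec)
  then have "col X j - col Y j = 0\<^sub>v m" using inj cX cY by simp
  then show "col X j = col Y j" by (rule vec_minus_zero_eq[OF cX cY])
qed (use X Y in simp_all)

lemma kernel_matrix:
  fixes N :: "complex mat"
  assumes N: "N \<in> carrier_mat n n"
  shows "\<exists>m K. K \<in> carrier_mat n m \<and> m \<le> n \<and> (\<forall>c\<in>carrier_vec m. K *\<^sub>v c = 0\<^sub>v n \<longrightarrow> c = 0\<^sub>v m)
     \<and> (\<forall>v\<in>mat_kernel N. \<exists>c\<in>carrier_vec m. K *\<^sub>v c = v) \<and> (\<forall>j<m. col K j \<in> mat_kernel N)"
proof -
  interpret NC: vec_space "TYPE(complex)" n .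
  interpret KN: kernel n n N by (unfold_locales) (rule N)
  obtain B where finB: "finite B" and bas: "KN.basis B" using kernel_basis_exists[OF N] by blast
  have BK: "B \<subseteq> mat_kernel N" and li: "\<not> KN.lin_dep B" and gen: "KN.span B = mat_kernel N"
    using bas unfolding KN.Ker.basis_def by auto
  have li': "\<not> NC.lin_dep B" using li KN.lindep_same[OF BK] by simp
  have span': "NC.span B = mat_kernel N" using gen KN.span_same[OF BK] by simp
  have Bc: "B \<subseteq> carrier_vec n" using BK N unfolding mat_kernel_def by auto
  obtain ks where ks: "set ks = B" "distinct ks" using finite_distinct_list[OF finB] by blast
  define m where "m = length ks"
  define K where "K = mat_of_cols n ks"
  have K: "K \<in> carrier_mat n m" unfolding K_def m_def by simp
  have ksc: "ks ! i \<in> carrier_vec n" if "i < m" for i using Bc ks that unfolding m_def by auto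
  have colK: "col K j = ks ! j" if "j < m" for j
    unfolding K_def using ksc[OF that] that m_def by (simp add: col_mat_of_cols)
  have "card B \<le> NC.dim" by (rule NC.li_le_dim(2)[OF NC.fin_dim Bc li'])
  then have mn: "m \<le> n" using ks distinct_card NC.dim_is_n unfolding m_def by metis
  have inj: "\<forall>c\<in>carrier_vec m. K *\<^sub>v c = 0\<^sub>v n \<longrightarrow> c = 0\<^sub>v m"
  proof (intro ballI impI)
    fix c assume c: "c \<in> carrier_vec m" and Kc: "K *\<^sub>v c = 0\<^sub>v n"
    define f where "f l = (\<Sum>i = 0..<length ks. if l = ks ! i then c $ i else 0)" for l
    have "K *\<^sub>v c = NC.lincomb f (set ks)"
      unfolding K_def f_def by (rule NC.mat_of_cols_mult_as_finsum) (use c ksc m_def in auto)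
    then have lc: "NC.lincomb f B = 0\<^sub>v n" using Kc ks by simp
    have f0: "f v = 0" if v: "v \<in> B" for v
    proof (rule ccontr)
      assume fv: "f v \<noteq> 0"
      have "NC.lin_dep B"
        by (rule NC.lin_dep_crit[OF finB subset_refl _ v]) (use fv lc in auto)
      with li' show False by simp
    qed
    have fi: "f (ks ! j) = c $ j" if j: "j < m" for j
    proof -
      have "f (ks ! j) = (\<Sum>i = 0..<length ks. if i = j then c $ i else 0)"
        unfolding f_def by (rule sum.cong) (use j ks(2) m_def nth_eq_iff_index_eq in auto)
      also have "\<dots> = c $ j" using j m_def by simp
      finally show ?thesis .
    qed
    show "c = 0\<^sub>v m"
    proof (rule eq_vecI)
      fix i assume "i < dim_vec (0\<^sub>v m)"
      then have i: "i < m" by simp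
      have "c $ i = f (ks ! i)" using fi[OF i] by simp
      also have "\<dots> = 0" using f0 ks i m_def by auto
      finally show "c $ i = 0\<^sub>v m $ i" using i by simp
    qed (use c in simp)
  qed
  have surj: "\<forall>v\<in>mat_kernel N. \<exists>c\<in>carrier_vec m. K *\<^sub>v c = v"
  proof
    fix v assume v: "v \<in> mat_kernel N"
    then have "v \<in> NC.span B" using span' by simp
    then obtain a where a: "NC.lincomb a B = v" using NC.finite_in_span[OF finB Bc] by blast
    have "NC.lincomb a (set ks) = NC.lincomb_list (\<lambda>i. a (ks ! i)) ks"
      by (rule NC.lincomb_as_lincomb_list_distinct) (use ks Bc in auto)
    also have "\<dots> = K *\<^sub>v vec m (\<lambda>i. a (ks ! i))"
      unfolding K_def m_def by (rule NC.lincomb_list_as_mat_mult) (use ks Bc in auto)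
    finally show "\<exists>c\<in>carrier_vec m. K *\<^sub>v c = v"
      using a ks by (intro bexI[of _ "vec m (\<lambda>i. a (ks ! i))"]) auto
  qed
  have cols: "\<forall>j<m. col K j \<in> mat_kernel N"
    using colK ks BK m_def by auto
  show ?thesis using K mn inj surj cols by blast
qed


lemma smult_one_mult_vec:
  fixes v :: "complex vec"
  assumes v: "v \<in> carrier_vec n"
  shows "(c \<cdot>\<^sub>m 1\<^sub>m n) *\<^sub>v v = c \<cdot>\<^sub>v v"
proof (rule eq_vecI)
  fix i assume i: "i < dim_vec (c \<cdot>\<^sub>v v)"
  then have i': "i < n" using v by simp
  have "(c \<cdot>\<^sub>m 1\<^sub>m n) *\<^sub>v v = (c \<cdot>\<^sub>m 1\<^sub>m n) *\<^sub>v v" ..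
  have "((c \<cdot>\<^sub>m 1\<^sub>m n) *\<^sub>v v) $ i = (\<Sum>k = 0..<n. (c * (if i = k then 1 else 0)) * v $ k)"
    using i' v by (simp add: mult_mat_vec_def scalar_prod_def row_def)
  also have "\<dots> = (\<Sum>k = 0..<n. if k = i then c * v $ k else 0)"
    by (rule sum.cong) auto
  also have "\<dots> = c * v $ i" using i' by simp
  finally show "((c \<cdot>\<^sub>m 1\<^sub>m n) *\<^sub>v v) $ i = (c \<cdot>\<^sub>v v) $ i" using i' v by simp
qed (use v in simp)

lemma mat_eq_from_vec:
  fixes A :: "complex mat"
  assumes A: "A \<in> carrier_mat n n" and all: "\<forall>x\<in>carrier_vec n. A *\<^sub>v x = e \<cdot>\<^sub>v x"
  shows "A = e \<cdot>\<^sub>m 1\<^sub>m n"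
proof (rule eq_matI)
  fix i j assume i: "i < dim_row (e \<cdot>\<^sub>m 1\<^sub>m n)" and j: "j < dim_col (e \<cdot>\<^sub>m 1\<^sub>m n)"
  then have i': "i < n" and j': "j < n" by auto
  have "A $$ (i, j) = (A *\<^sub>v unit_vec n j) $ i" using A i' j' by simp
  also have "\<dots> = (e \<cdot>\<^sub>v unit_vec n j) $ i" using all j' by simp
  also have "\<dots> = (e \<cdot>\<^sub>m 1\<^sub>m n) $$ (i, j)" using i' j' by (simp add: unit_vec_def)
  finally show "A $$ (i, j) = (e \<cdot>\<^sub>m 1\<^sub>m n) $$ (i, j)" .
qed (use A in auto)

lemma common_eigenvector:
  fixes As :: "complex mat list"
  assumes "0 < n" "\<forall>A\<in>set As. A \<in> carrier_mat n n" "\<forall>A\<in>set As. \<forall>B\<in>set As. A * B = B * A"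
  shows "\<exists>v. v \<in> carrier_vec n \<and> v \<noteq> 0\<^sub>v n \<and> (\<forall>A\<in>set As. \<exists>e. A *\<^sub>v v = e \<cdot>\<^sub>v v)"
  using assms
proof (induction n arbitrary: As rule: less_induct)
  case (less n)
  note n = less.prems(1) and car = less.prems(2) and comm = less.prems(3)
  show ?case
  proof (cases "\<forall>A\<in>set As. \<exists>c. A = c \<cdot>\<^sub>m 1\<^sub>m n")
    case True
    have u: "(unit_vec n 0 :: complex vec) \<in> carrier_vec n" by simp
    have u0: "(unit_vec n 0 :: complex vec) \<noteq> 0\<^sub>v n"
    proof
      assume "(unit_vec n 0 :: complex vec) = 0\<^sub>v n"
      then have "(unit_vec n 0 :: complex vec) $ 0 = 0\<^sub>v n $ 0" by (rule arg_cong[where f="\<lambda>v. v $ 0"])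
      then show False using n by simp
    qed
    have "\<forall>A\<in>set As. \<exists>e. A *\<^sub>v unit_vec n 0 = e \<cdot>\<^sub>v unit_vec n 0"
    proof
      fix A assume "A \<in> set As"
      then obtain c where "A = c \<cdot>\<^sub>m 1\<^sub>m n" using True by blast
      then show "\<exists>e. A *\<^sub>v unit_vec n 0 = e \<cdot>\<^sub>v unit_vec n 0"
        using smult_one_mult_vec[OF u, of c] by blast
    qed
    then show ?thesis using u u0 by blast
  next
    case False
    then obtain A0 where A0: "A0 \<in> set As" and ns: "\<forall>c. A0 \<noteq> c \<cdot>\<^sub>m 1\<^sub>m n" by blast
    have A0c: "A0 \<in> carrier_mat n n" using car A0 by blast
    obtain e where "e \<in> spectrum A0" using spectrum_non_empty[OF A0c n] by blast
    then obtain w where w: "eigenvector A0 w e" unfolding spectrum_def eigenvalue_def by blast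
    have wc: "w \<in> carrier_vec n" "w \<noteq> 0\<^sub>v n" "A0 *\<^sub>v w = e \<cdot>\<^sub>v w"
      using w A0c unfolding eigenvector_def by auto
    define N where "N = char_matrix A0 e"
    have Nc: "N \<in> carrier_mat n n" unfolding N_def using A0c by simp
    have kerN: "v \<in> mat_kernel N \<longleftrightarrow> v \<in> carrier_vec n \<and> A0 *\<^sub>v v = e \<cdot>\<^sub>v v" for v
    proof (cases "v = 0\<^sub>v n")
      case True
      then show ?thesis using Nc A0c by (auto simp: mat_kernel_def)
    next
      case False
      have "v \<in> mat_kernel N \<longleftrightarrow> v \<in> carrier_vec n \<and> N *\<^sub>v v = 0\<^sub>v n"
        using Nc unfolding mat_kernel_def by auto
      also have "\<dots> \<longleftrightarrow> eigenvector A0 v e"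
        unfolding eigenvector_char_matrix[OF A0c] N_def using False by auto
      also have "\<dots> \<longleftrightarrow> v \<in> carrier_vec n \<and> A0 *\<^sub>v v = e \<cdot>\<^sub>v v"
        unfolding eigenvector_def using False A0c by auto
      finally show ?thesis .
    qed
    obtain m K where K: "K \<in> carrier_mat n m" and mn: "m \<le> n"
      and inj: "\<forall>c\<in>carrier_vec m. K *\<^sub>v c = 0\<^sub>v n \<longrightarrow> c = 0\<^sub>v m"
      and surj: "\<forall>v\<in>mat_kernel N. \<exists>c\<in>carrier_vec m. K *\<^sub>v c = v"
      and cols: "\<forall>j<m. col K j \<in> mat_kernel N"
      using kernel_matrix[OF Nc] by blast
    have m0: "0 < m"
    proof (rule ccontr)
      assume "\<not> 0 < m"
      then have m: "m = 0" by simp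
      obtain c where c: "c \<in> carrier_vec m" "K *\<^sub>v c = w" using surj kerN wc by blast
      have "K *\<^sub>v c = 0\<^sub>v n"
        by (rule eq_vecI) (use K c m in \<open>auto simp: mult_mat_vec_def scalar_prod_def\<close>)
      then show False using c wc by simp
    qed
    have NK: "N * K = 0\<^sub>m n m"
    proof (rule mat_col_eqI)
      fix j assume "j < dim_col (0\<^sub>m n m)"
      then have j: "j < m" by simp
      have "col (N * K) j = N *\<^sub>v col K j" by (rule col_mult2[OF Nc K j])
      also have "\<dots> = 0\<^sub>v n" using cols j Nc unfolding mat_kernel_def by auto
      finally show "col (N * K) j = col (0\<^sub>m n m) j" using j by simp
    qed (use Nc K in auto)
    have img: "K *\<^sub>v y \<in> mat_kernel N" if y: "y \<in> carrier_vec m" for y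
    proof -
      have "N *\<^sub>v (K *\<^sub>v y) = (N * K) *\<^sub>v y" using Nc K y by (simp add: assoc_mult_mat_vec)
      also have "\<dots> = 0\<^sub>v n" unfolding NK
        by (rule eq_vecI) (use y in \<open>auto simp: mult_mat_vec_def scalar_prod_def\<close>)
      finally show ?thesis using K y Nc unfolding mat_kernel_def by auto
    qed
    have mlt: "m < n"
    proof (rule ccontr)
      assume "\<not> m < n"
      then have m: "m = n" using mn by simp
      have Kc: "K \<in> carrier_mat n n" using K m by simp
      have "det K \<noteq> 0"
      proof
        assume "det K = 0"
        then obtain x where "x \<in> carrier_vec n" "x \<noteq> 0\<^sub>v n" "K *\<^sub>v x = 0\<^sub>v n"
          using det_0_iff_vec_prod_zero[OF Kc] by blast
        then show False using inj m by blast
      qed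
      from det_non_zero_imp_unit[OF Kc this, unfolded Units_def, of "()"]
      obtain K' where K': "K' \<in> carrier_mat n n" and KK': "K * K' = 1\<^sub>m n"
        by (auto simp: ring_mat_def)
      have "\<forall>x\<in>carrier_vec n. A0 *\<^sub>v x = e \<cdot>\<^sub>v x"
      proof
        fix x :: "complex vec" assume x: "x \<in> carrier_vec n"
        have "K *\<^sub>v (K' *\<^sub>v x) = (K * K') *\<^sub>v x" using Kc K' x by (simp add: assoc_mult_mat_vec)
        also have "\<dots> = x" using KK' x by simp
        finally have xe: "x = K *\<^sub>v (K' *\<^sub>v x)" by simp
        have "K' *\<^sub>v x \<in> carrier_vec m" using K' x m by simp
        then have "x \<in> mat_kernel N" using img xe by metis
        then show "A0 *\<^sub>v x = e \<cdot>\<^sub>v x" using kerN by blast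
      qed
      then have "A0 = e \<cdot>\<^sub>m 1\<^sub>m n" by (rule mat_eq_from_vec[OF A0c])
      then show False using ns by blast
    qed
    define Cf where "Cf A = (SOME C. C \<in> carrier_mat m m \<and> K * C = A * K)" for A
    have exC: "\<exists>C. C \<in> carrier_mat m m \<and> K * C = A * K" if A: "A \<in> set As" for A
    proof -
      have Ac: "A \<in> carrier_mat n n" using car A by blast
      have inv: "A *\<^sub>v v \<in> mat_kernel N" if v: "v \<in> mat_kernel N" for v
      proof -
        have vc: "v \<in> carrier_vec n" and ev: "A0 *\<^sub>v v = e \<cdot>\<^sub>v v" using v kerN by auto
        have "A0 *\<^sub>v (A *\<^sub>v v) = (A0 * A) *\<^sub>v v" using A0c Ac vc by (simp add: assoc_mult_mat_vec)
        also have "\<dots> = (A * A0) *\<^sub>v v" using comm[rule_format, OF A0 A] by simp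
        also have "\<dots> = A *\<^sub>v (A0 *\<^sub>v v)" using A0c Ac vc by (simp add: assoc_mult_mat_vec)
        also have "\<dots> = e \<cdot>\<^sub>v (A *\<^sub>v v)" using ev Ac vc by (simp add: mult_mat_vec)
        finally show ?thesis using kerN Ac vc by simp
      qed
      have "\<forall>j\<in>{..<m}. \<exists>c. c \<in> carrier_vec m \<and> K *\<^sub>v c = A *\<^sub>v col K j"
        using surj inv cols by blast
      from bchoice[OF this] obtain cf where cf: "\<forall>j\<in>{..<m}. cf j \<in> carrier_vec m \<and> K *\<^sub>v cf j = A *\<^sub>v col K j"
        by blast
      define C where "C = mat_of_cols m (map cf [0..<m])"
      have Cc: "C \<in> carrier_mat m m" unfolding C_def using mat_of_cols_carrier(1)[of m "map cf [0..<m]"] by simp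
      have colC: "col C j = cf j" if "j < m" for j unfolding C_def using cf that by (simp add: col_mat_of_cols)
      have "K * C = A * K"
      proof (rule mat_col_eqI)
        fix j assume "j < dim_col (A * K)"
        then have j: "j < m" using K by simp
        have "col (K * C) j = K *\<^sub>v col C j" by (rule col_mult2[OF K Cc j])
        also have "\<dots> = A *\<^sub>v col K j" using colC[OF j] cf j by simp
        also have "\<dots> = col (A * K) j" by (rule col_mult2[OF Ac K j, symmetric])
        finally show "col (K * C) j = col (A * K) j" .
      qed (use K Cc Ac in auto)
      then show ?thesis using Cc by blast
    qed
    have Cf: "Cf A \<in> carrier_mat m m \<and> K * Cf A = A * K" if "A \<in> set As" for A
      unfolding Cf_def by (rule someI_ex[OF exC[OF that]])
    define Cs where "Cs = map Cf As"
    have Cs_car: "\<forall>C\<in>set Cs. C \<in> carrier_mat m m" using Cf unfolding Cs_def by auto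
    have Cs_comm: "\<forall>C\<in>set Cs. \<forall>D\<in>set Cs. C * D = D * C"
    proof (intro ballI)
      fix C D assume "C \<in> set Cs" "D \<in> set Cs"
      then obtain A B where A: "A \<in> set As" "C = Cf A" and B: "B \<in> set As" "D = Cf B"
        unfolding Cs_def by auto
      have Ac: "A \<in> carrier_mat n n" and Bc: "B \<in> carrier_mat n n" using car A B by auto
      have CA: "C \<in> carrier_mat m m" "K * C = A * K" using Cf A by auto
      have DB: "D \<in> carrier_mat m m" "K * D = B * K" using Cf B by auto
      have "K * (C * D) = (K * C) * D" by (rule assoc_mult_mat[symmetric, OF K CA(1) DB(1)])
      also have "\<dots> = (A * K) * D" by (simp only: CA(2))
      also have "\<dots> = A * (K * D)" by (rule assoc_mult_mat[OF Ac K DB(1)])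
      also have "\<dots> = A * (B * K)" by (simp only: DB(2))
      also have "\<dots> = (A * B) * K" by (rule assoc_mult_mat[symmetric, OF Ac Bc K])
      also have "\<dots> = (B * A) * K" using comm A B by simp
      also have "\<dots> = B * (A * K)" by (rule assoc_mult_mat[OF Bc Ac K])
      also have "\<dots> = B * (K * C)" by (simp only: CA(2))
      also have "\<dots> = (B * K) * C" by (rule assoc_mult_mat[symmetric, OF Bc K CA(1)])
      also have "\<dots> = (K * D) * C" by (simp only: DB(2))
      also have "\<dots> = K * (D * C)" by (rule assoc_mult_mat[OF K DB(1) CA(1)])
      finally show "C * D = D * C"
        by (rule mat_mult_left_inj[OF K inj mult_carrier_mat[OF CA(1) DB(1)] mult_carrier_mat[OF DB(1) CA(1)]])
    qed
    obtain u where u: "u \<in> carrier_vec m" "u \<noteq> 0\<^sub>v m" and eu: "\<forall>C\<in>set Cs. \<exists>l. C *\<^sub>v u = l \<cdot>\<^sub>v u"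
      using less.IH[OF mlt m0 Cs_car Cs_comm] by blast
    define v where "v = K *\<^sub>v u"
    have vc: "v \<in> carrier_vec n" using K u unfolding v_def by simp
    have v0: "v \<noteq> 0\<^sub>v n" using inj u unfolding v_def by blast
    have "\<forall>A\<in>set As. \<exists>l. A *\<^sub>v v = l \<cdot>\<^sub>v v"
    proof
      fix A assume A: "A \<in> set As"
      have Ac: "A \<in> carrier_mat n n" using car A by blast
      have CA: "Cf A \<in> carrier_mat m m" "K * Cf A = A * K" using Cf A by auto
      obtain l where l: "Cf A *\<^sub>v u = l \<cdot>\<^sub>v u" using eu A unfolding Cs_def by auto
      have "A *\<^sub>v v = (A * K) *\<^sub>v u" using Ac K u unfolding v_def by (simp add: assoc_mult_mat_vec)
      also have "\<dots> = (K * Cf A) *\<^sub>v u" using CA by simp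
      also have "\<dots> = K *\<^sub>v (Cf A *\<^sub>v u)" by (rule assoc_mult_mat_vec[OF K CA(1) u(1)])
      also have "\<dots> = l \<cdot>\<^sub>v v" using l K u unfolding v_def by (simp add: mult_mat_vec)
      finally show "\<exists>l. A *\<^sub>v v = l \<cdot>\<^sub>v v" by blast
    qed
    then show ?thesis using vc v0 by blast
  qed
qed


lemma four_block_lower_right_eq:
  assumes X1: "X1 \<in> carrier_mat 1 1" and Y1: "Y1 \<in> carrier_mat 1 1"
    and X4: "X4 \<in> carrier_mat m m" and Y4: "Y4 \<in> carrier_mat m m"
    and eq: "four_block_mat X1 X2 X3 X4 = four_block_mat Y1 Y2 Y3 Y4"
  shows "X4 = Y4"
proof (rule eq_matI)
  fix i j assume i: "i < dim_row Y4" and j: "j < dim_col Y4"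
  have "four_block_mat X1 X2 X3 X4 $$ (Suc i, Suc j) = X4 $$ (i, j)"
    using X1 X4 Y4 i j by simp
  moreover have "four_block_mat Y1 Y2 Y3 Y4 $$ (Suc i, Suc j) = Y4 $$ (i, j)"
    using Y1 Y4 i j by simp
  ultimately show "X4 $$ (i, j) = Y4 $$ (i, j)" using eq by simp
qed (use X4 Y4 in auto)

lemma assoc6:
  fixes a b c d e f :: "complex mat"
  assumes "a \<in> carrier_mat n n" "b \<in> carrier_mat n n" "c \<in> carrier_mat n n"
    "d \<in> carrier_mat n n" "e \<in> carrier_mat n n" "f \<in> carrier_mat n n"
  shows "(a * b * c) * (d * e * f) = a * (b * (c * (d * (e * f))))"
proof -
  have ab: "a * b \<in> carrier_mat n n" and def: "d * (e * f) \<in> carrier_mat n n"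
    and cdef: "c * (d * (e * f)) \<in> carrier_mat n n" using assms by auto
  have "(a * b * c) * (d * e * f) = (a * b * c) * (d * (e * f))"
    by (simp only: assoc_mult_mat[OF assms(4) assms(5) assms(6)])
  also have "\<dots> = (a * b) * (c * (d * (e * f)))"
    by (rule assoc_mult_mat[OF ab assms(3) def])
  also have "\<dots> = a * (b * (c * (d * (e * f))))"
    by (rule assoc_mult_mat[OF assms(1) assms(2) cdef])
  finally show ?thesis .
qed

lemma simul_triangular:
  fixes As :: "complex mat list"
  assumes "\<forall>A\<in>set As. A \<in> carrier_mat n n" "\<forall>A\<in>set As. \<forall>B\<in>set As. A * B = B * A"
  shows "\<exists>P Q. P \<in> carrier_mat n n \<and> Q \<in> carrier_mat n n \<and> P * Q = 1\<^sub>m n \<and> Q * P = 1\<^sub>m n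
     \<and> (\<forall>A\<in>set As. \<exists>T. similar_mat_wit A T P Q \<and> upper_triangular T)"
  using assms
proof (induction n arbitrary: As)
  case 0
  have "\<forall>A\<in>set As. \<exists>T. similar_mat_wit A T (1\<^sub>m 0) (1\<^sub>m 0) \<and> upper_triangular T"
  proof
    fix A assume A: "A \<in> set As"
    then have Ac: "A \<in> carrier_mat 0 0" using 0 by blast
    show "\<exists>T. similar_mat_wit A T (1\<^sub>m 0) (1\<^sub>m 0) \<and> upper_triangular T"
      by (intro exI[of _ A] conjI similar_mat_wit_refl[OF Ac]) (use Ac in \<open>auto simp: upper_triangular_def\<close>)
  qed
  then show ?case by (intro exI[of _ "1\<^sub>m 0"]) auto
next
  case (Suc m)
  define n where "n = Suc m"
  have car: "\<forall>A\<in>set As. A \<in> carrier_mat n n" and comm: "\<forall>A\<in>set As. \<forall>B\<in>set As. A * B = B * A"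
    using Suc.prems n_def by auto
  obtain v where v: "v \<in> carrier_vec n" "v \<noteq> 0\<^sub>v n" and ev: "\<forall>A\<in>set As. \<exists>e. A *\<^sub>v v = e \<cdot>\<^sub>v v"
    using common_eigenvector[of n As] car comm n_def by auto
  interpret cof_vec_space n "TYPE(complex)" .
  define b where "b = basis_completion v"
  define ws where "ws = gram_schmidt n b"
  define W where "W = mat_of_cols n ws"
  define W' where "W' = corthogonal_inv W"
  from basis_completion[OF v(1) v(2), folded b_def]
  have span_b: "span (set b) = carrier_vec n" and dist_b: "distinct b"
    and indep: "\<not> lin_dep (set b)" and b: "set b \<subseteq> carrier_vec n" and hdb: "hd b = v"
    and len_b: "length b = n" by auto
  from hdb len_b n_def obtain vs where bv: "b = v # vs" by (cases b, auto)
  from gram_schmidt_result[OF b dist_b indep refl, folded ws_def]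
  have ws: "set ws \<subseteq> carrier_vec n" "corthogonal ws" "length ws = n"
    by (auto simp: len_b)
  from gram_schmidt_hd[OF v(1), of vs, folded bv] have hdws: "hd ws = v" unfolding ws_def .
  have orth_W: "corthogonal_mat W" using orthogonal_mat_of_cols ws unfolding W_def .
  have W: "W \<in> carrier_mat n n"
    using ws unfolding W_def using mat_of_cols_carrier(1)[of n ws] by auto
  have W': "W' \<in> carrier_mat n n" unfolding W'_def corthogonal_inv_def using W
    by (auto simp: mat_of_rows_def)
  from corthogonal_inv_result[OF orth_W]
  have W'W: "inverts_mat W' W" unfolding W'_def .
  hence WW': "inverts_mat W W'" using mat_mult_left_right_inverse[OF W' W] W' W
    unfolding inverts_mat_def by auto
  define f where "f A = (case split_block (W' * A * W) 1 1 of (A1, A2, A0, A3) \<Rightarrow> A3)" for A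
  have blk: "\<exists>A1 A2. A1 \<in> carrier_mat 1 1 \<and> A2 \<in> carrier_mat 1 m \<and> f A \<in> carrier_mat m m
      \<and> W' * A * W = four_block_mat A1 A2 (0\<^sub>m m 1) (f A) \<and> similar_mat_wit A (W' * A * W) W W'"
    if A: "A \<in> set As" for A
  proof -
    have Ac: "A \<in> carrier_mat n n" using car A by blast
    obtain e where eig: "A *\<^sub>v v = e \<cdot>\<^sub>v v" using ev A by blast
    let ?A' = "W' * A * W"
    have A'c: "?A' \<in> carrier_mat n n" using W W' Ac by auto
    have A'A_wit: "similar_mat_wit ?A' A W' W"
      by (rule similar_mat_witI[of _ _ n], insert W W' Ac A'c W'W WW', auto simp: inverts_mat_def)
    from similar_mat_wit_sym[OF this] have sim: "similar_mat_wit A ?A' W W'" .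
    have n0: "n \<noteq> 0" using n_def by simp
    have col0: "col ?A' 0 = vec n (\<lambda> i. if i = 0 then e else 0)"
      unfolding W'_def W_def using corthogonal_col_ev_0[OF Ac v(1) v(2) eig n0 hdws ws] .
    obtain A1 A2 A0 A3 where splitA': "split_block ?A' 1 1 = (A1, A2, A0, A3)"
      by (cases "split_block ?A' 1 1", auto)
    have fA: "f A = A3" unfolding f_def splitA' by simp
    from A'c n_def have "dim_row ?A' = 1 + m" "dim_col ?A' = 1 + m" by auto
    from split_block[OF splitA' this] have A1: "A1 \<in> carrier_mat 1 1"
      and A2: "A2 \<in> carrier_mat 1 m" and A3: "A3 \<in> carrier_mat m m"
      and A'block: "?A' = four_block_mat A1 A2 A0 A3" by auto
    {
      fix i
      assume i: "i < m"
      have dr: "dim_row ?A' = n" using A'c by (simp only: carrier_matD)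
      have "?A' $$ (Suc i, 0) = col ?A' 0 $ Suc i" using dr i n_def by (simp add: col_def)
      also have "\<dots> = 0" using arg_cong[OF col0, of "\<lambda> v. v $ Suc i"] i n_def by simp
      finally have "?A' $$ (Suc i, 0) = 0" .
    } note A'0 = this
    have A0id: "A0 = 0\<^sub>m m 1"
      using splitA'[unfolded split_block_def Let_def] A'0 A'c n_def W W' by auto
    show ?thesis using A1 A2 A3 A'block A0id fA sim by auto
  qed
  have fcar: "\<forall>B\<in>set (map f As). B \<in> carrier_mat m m" using blk by auto
  have fcomm: "\<forall>B\<in>set (map f As). \<forall>C\<in>set (map f As). B * C = C * B"
  proof (intro ballI)
    fix B C assume "B \<in> set (map f As)" "C \<in> set (map f As)"
    then obtain A A' where A: "A \<in> set As" "B = f A" and A': "A' \<in> set As" "C = f A'" by auto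
    have Ac: "A \<in> carrier_mat n n" and A'c: "A' \<in> carrier_mat n n" using car A A' by auto
    obtain X1 X2 where X: "X1 \<in> carrier_mat 1 1" "X2 \<in> carrier_mat 1 m" "f A \<in> carrier_mat m m"
      "W' * A * W = four_block_mat X1 X2 (0\<^sub>m m 1) (f A)" using blk[OF A(1)] by blast
    obtain Y1 Y2 where Y: "Y1 \<in> carrier_mat 1 1" "Y2 \<in> carrier_mat 1 m" "f A' \<in> carrier_mat m m"
      "W' * A' * W = four_block_mat Y1 Y2 (0\<^sub>m m 1) (f A')" using blk[OF A'(1)] by blast
    have WW'1: "W * W' = 1\<^sub>m n" using WW' unfolding inverts_mat_def using W by simp
    have prod: "(W' * A * W) * (W' * A' * W) = W' * (A * A') * W"
      if "A \<in> carrier_mat n n" "A' \<in> carrier_mat n n" for A A'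
    proof -
      have "(W' * A * W) * (W' * A' * W) = W' * (A * (W * (W' * (A' * W))))"
        by (rule assoc6) (use W W' that in auto)
      also have "W * (W' * (A' * W)) = (W * W') * (A' * W)"
        by (rule assoc_mult_mat[symmetric]) (use W W' that in auto)
      also have "\<dots> = A' * W" using WW'1 that W by simp
      also have "W' * (A * (A' * W)) = W' * (A * A') * W"
      proof -
        have "W' * (A * A') * W = W' * ((A * A') * W)"
          by (rule assoc_mult_mat) (use W W' that in auto)
        also have "(A * A') * W = A * (A' * W)"
          by (rule assoc_mult_mat) (use W W' that in auto)
        finally show ?thesis by simp
      qed
      finally show ?thesis .
    qed
    have c0: "four_block_mat X1 X2 (0\<^sub>m m 1) (f A) * four_block_mat Y1 Y2 (0\<^sub>m m 1) (f A')
        = four_block_mat Y1 Y2 (0\<^sub>m m 1) (f A') * four_block_mat X1 X2 (0\<^sub>m m 1) (f A)"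
      using prod[OF Ac A'c] prod[OF A'c Ac] X(4) Y(4) comm A(1) A'(1) by metis
    have c1: "four_block_mat X1 X2 (0\<^sub>m m 1) (f A) * four_block_mat Y1 Y2 (0\<^sub>m m 1) (f A')
      = four_block_mat (X1 * Y1 + X2 * 0\<^sub>m m 1) (X1 * Y2 + X2 * f A')
        (0\<^sub>m m 1 * Y1 + f A * 0\<^sub>m m 1) (0\<^sub>m m 1 * Y2 + f A * f A')"
      by (rule mult_four_block_mat) (use X Y in auto)
    have c2: "four_block_mat Y1 Y2 (0\<^sub>m m 1) (f A') * four_block_mat X1 X2 (0\<^sub>m m 1) (f A)
      = four_block_mat (Y1 * X1 + Y2 * 0\<^sub>m m 1) (Y1 * X2 + Y2 * f A)
        (0\<^sub>m m 1 * X1 + f A' * 0\<^sub>m m 1) (0\<^sub>m m 1 * X2 + f A' * f A)"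
      by (rule mult_four_block_mat) (use X Y in auto)
    have eqfb: "four_block_mat (X1 * Y1 + X2 * 0\<^sub>m m 1) (X1 * Y2 + X2 * f A')
        (0\<^sub>m m 1 * Y1 + f A * 0\<^sub>m m 1) (0\<^sub>m m 1 * Y2 + f A * f A')
      = four_block_mat (Y1 * X1 + Y2 * 0\<^sub>m m 1) (Y1 * X2 + Y2 * f A)
        (0\<^sub>m m 1 * X1 + f A' * 0\<^sub>m m 1) (0\<^sub>m m 1 * X2 + f A' * f A)"
      unfolding c1[symmetric] c2[symmetric] by (rule c0)
    have k1: "X1 * Y1 + X2 * 0\<^sub>m m 1 \<in> carrier_mat 1 1" using X Y by auto
    have k2: "Y1 * X1 + Y2 * 0\<^sub>m m 1 \<in> carrier_mat 1 1" using X Y by auto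
    have k3: "0\<^sub>m m 1 * Y2 + f A * f A' \<in> carrier_mat m m" using X Y by auto
    have k4: "0\<^sub>m m 1 * X2 + f A' * f A \<in> carrier_mat m m" using X Y by auto
    have "0\<^sub>m m 1 * Y2 + f A * f A' = 0\<^sub>m m 1 * X2 + f A' * f A"
      by (rule four_block_lower_right_eq[OF k1 k2 k3 k4 eqfb])
    moreover have "0\<^sub>m m 1 * Y2 + f A * f A' = f A * f A'" using X Y by simp
    moreover have "0\<^sub>m m 1 * X2 + f A' * f A = f A' * f A" using X Y by simp
    ultimately have "f A * f A' = f A' * f A" by simp
    then show "B * C = C * B" using A A' by simp
  qed
  obtain P1 Q1 where P1: "P1 \<in> carrier_mat m m" and Q1: "Q1 \<in> carrier_mat m m"
    and PQ1: "P1 * Q1 = 1\<^sub>m m" and QP1: "Q1 * P1 = 1\<^sub>m m"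
    and IH: "\<forall>B\<in>set (map f As). \<exists>T. similar_mat_wit B T P1 Q1 \<and> upper_triangular T"
    using Suc.IH[OF fcar fcomm] by blast
  let ?P' = "four_block_mat (1\<^sub>m 1) (0\<^sub>m 1 m) (0\<^sub>m m 1) P1"
  let ?Q' = "four_block_mat (1\<^sub>m 1) (0\<^sub>m 1 m) (0\<^sub>m m 1) Q1"
  have one_sim: "similar_mat_wit (1\<^sub>m n) (1\<^sub>m n) (W * ?P') (?Q' * W')"
  proof -
    have s1: "similar_mat_wit (1\<^sub>m n) (1\<^sub>m n) W W'"
      by (rule similar_mat_witI[of _ _ n], insert W W' W'W WW', auto simp: inverts_mat_def)
    have s2: "similar_mat_wit (1\<^sub>m m) (1\<^sub>m m) P1 Q1"
      by (rule similar_mat_witI[of _ _ m], insert P1 Q1 PQ1 QP1, auto)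
    have s3: "similar_mat_wit (four_block_mat (1\<^sub>m 1) (0\<^sub>m 1 m) (0\<^sub>m m 1) (1\<^sub>m m))
        (four_block_mat (1\<^sub>m 1) (0\<^sub>m 1 m) (0\<^sub>m m 1) (1\<^sub>m m)) ?P' ?Q'"
      by (rule similar_mat_wit_four_block[OF similar_mat_wit_refl[of "1\<^sub>m 1" 1] s2], insert P1 Q1, auto)
    then have s3': "similar_mat_wit (1\<^sub>m n) (1\<^sub>m n) ?P' ?Q'" using n_def by simp
    show ?thesis by (rule similar_mat_wit_trans[OF s1 s3'])
  qed
  from similar_mat_witD2[OF one_carrier_mat[of n] one_sim]
  have PQ: "W * ?P' \<in> carrier_mat n n" "?Q' * W' \<in> carrier_mat n n"
    "(W * ?P') * (?Q' * W') = 1\<^sub>m n" "(?Q' * W') * (W * ?P') = 1\<^sub>m n" by auto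
  have "\<forall>A\<in>set As. \<exists>T. similar_mat_wit A T (W * ?P') (?Q' * W') \<and> upper_triangular T"
  proof
    fix A assume A: "A \<in> set As"
    obtain A1 A2 where A1: "A1 \<in> carrier_mat 1 1" and A2: "A2 \<in> carrier_mat 1 m"
      and A3: "f A \<in> carrier_mat m m" and blockA: "W' * A * W = four_block_mat A1 A2 (0\<^sub>m m 1) (f A)"
      and sim: "similar_mat_wit A (W' * A * W) W W'" using blk[OF A] by blast
    obtain T3 where simIH: "similar_mat_wit (f A) T3 P1 Q1" and ut3: "upper_triangular T3"
      using IH A by auto
    have T3: "T3 \<in> carrier_mat m m" using similar_mat_witD2[OF A3 simIH] by auto
    have A0_eq: "0\<^sub>m m 1 = P1 * 0\<^sub>m m 1 * 1\<^sub>m 1" using P1 by auto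
    have simA'C: "similar_mat_wit (four_block_mat A1 A2 (0\<^sub>m m 1) (f A))
        (four_block_mat A1 (A2 * P1) (0\<^sub>m m 1) T3) ?P' ?Q'"
      by (rule similar_mat_wit_four_block[OF similar_mat_wit_refl[OF A1] simIH _ A0_eq A1 A3],
        insert PQ1 A2 P1 Q1, auto)
    have ut1: "upper_triangular A1" using A1 unfolding upper_triangular_def by auto
    have ut: "upper_triangular (four_block_mat A1 (A2 * P1) (0\<^sub>m m 1) T3)"
      by (rule upper_triangular_four_block[OF A1 T3 ut1 ut3])
    from similar_mat_wit_trans[OF sim[unfolded blockA] simA'C] ut
    show "\<exists>T. similar_mat_wit A T (W * ?P') (?Q' * W') \<and> upper_triangular T" by blast
  qed
  then show ?case using PQ n_def by blast
qed

lemma conj_mult: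
  fixes Q A B P :: "complex mat"
  assumes Q: "Q \<in> carrier_mat d d" and P: "P \<in> carrier_mat d d" and A: "A \<in> carrier_mat d d"
    and B: "B \<in> carrier_mat d d" and PQ: "P * Q = 1\<^sub>m d"
  shows "(Q * A * P) * (Q * B * P) = Q * (A * B) * P"
proof -
  have "(Q * A * P) * (Q * B * P) = Q * (A * (P * (Q * (B * P))))"
    by (rule assoc6[OF Q A P Q B P])
  also have "P * (Q * (B * P)) = (P * Q) * (B * P)"
    by (rule assoc_mult_mat[symmetric]) (use Q P B in auto)
  also have "\<dots> = B * P" using PQ B P by simp
  also have "Q * (A * (B * P)) = Q * (A * B) * P"
  proof -
    have "Q * (A * B) * P = Q * ((A * B) * P)" by (rule assoc_mult_mat) (use Q P A B in auto)
    also have "(A * B) * P = A * (B * P)" by (rule assoc_mult_mat) (use P A B in auto)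
    finally show ?thesis by simp
  qed
  finally show ?thesis .
qed

lemma conj_rep:
  assumes \<phi>: "lie_rep sc br d \<phi>" and P: "P \<in> carrier_mat d d" and Q: "Q \<in> carrier_mat d d"
    and PQ: "P * Q = 1\<^sub>m d"
  shows "lie_rep sc br d (\<lambda>x. Q * \<phi> x * P)"
proof -
  have c\<phi>: "\<And>x. \<phi> x \<in> carrier_mat d d" and a\<phi>: "\<And>x y. \<phi> (x + y) = \<phi> x + \<phi> y"
    and s\<phi>: "\<And>c x. \<phi> (sc c x) = c \<cdot>\<^sub>m \<phi> x" and b\<phi>: "\<And>x y. \<phi> (br x y) = \<phi> x * \<phi> y - \<phi> y * \<phi> x"
    using \<phi> unfolding lie_rep_def by blast+
  show ?thesis unfolding lie_rep_def
  proof (intro conjI allI)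
    fix x show "Q * \<phi> x * P \<in> carrier_mat d d" using P Q c\<phi> by auto
  next
    fix x y
    have "Q * (\<phi> x + \<phi> y) = Q * \<phi> x + Q * \<phi> y" by (rule mult_add_distrib_mat[OF Q c\<phi> c\<phi>])
    moreover have "(Q * \<phi> x + Q * \<phi> y) * P = Q * \<phi> x * P + Q * \<phi> y * P"
      by (rule add_mult_distrib_mat[OF mult_carrier_mat[OF Q c\<phi>] mult_carrier_mat[OF Q c\<phi>] P])
    ultimately show "Q * \<phi> (x + y) * P = Q * \<phi> x * P + Q * \<phi> y * P" by (simp add: a\<phi>)
  next
    fix c x
    have "Q * (c \<cdot>\<^sub>m \<phi> x) = c \<cdot>\<^sub>m (Q * \<phi> x)" by (rule mult_smult_distrib[OF Q c\<phi>])
    moreover have "(c \<cdot>\<^sub>m (Q * \<phi> x)) * P = c \<cdot>\<^sub>m (Q * \<phi> x * P)"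
      by (rule mult_smult_assoc_mat[OF mult_carrier_mat[OF Q c\<phi>] P])
    ultimately show "Q * \<phi> (sc c x) * P = c \<cdot>\<^sub>m (Q * \<phi> x * P)" by (simp add: s\<phi>)
  next
    fix x y
    have "Q * (\<phi> x * \<phi> y - \<phi> y * \<phi> x) = Q * (\<phi> x * \<phi> y) - Q * (\<phi> y * \<phi> x)"
      by (rule mult_minus_distrib_mat[OF Q mult_carrier_mat[OF c\<phi> c\<phi>] mult_carrier_mat[OF c\<phi> c\<phi>]])
    moreover have "(Q * (\<phi> x * \<phi> y) - Q * (\<phi> y * \<phi> x)) * P = Q * (\<phi> x * \<phi> y) * P - Q * (\<phi> y * \<phi> x) * P"
      by (rule minus_mult_distrib_mat[OF mult_carrier_mat[OF Q mult_carrier_mat[OF c\<phi> c\<phi>]] mult_carrier_mat[OF Q mult_carrier_mat[OF c\<phi> c\<phi>]] P])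
    moreover have "Q * (\<phi> x * \<phi> y) * P = (Q * \<phi> x * P) * (Q * \<phi> y * P)"
      by (rule conj_mult[symmetric, OF Q P c\<phi> c\<phi> PQ])
    moreover have "Q * (\<phi> y * \<phi> x) * P = (Q * \<phi> y * P) * (Q * \<phi> x * P)"
      by (rule conj_mult[symmetric, OF Q P c\<phi> c\<phi> PQ])
    ultimately show "Q * \<phi> (br x y) * P = Q * \<phi> x * P * (Q * \<phi> y * P) - Q * \<phi> y * P * (Q * \<phi> x * P)"
      by (simp add: b\<phi>)
  qed
qed

lemma conj_lincomb_entry:
  fixes Q P :: "complex mat"
  assumes Q: "Q \<in> carrier_mat d d" and P: "P \<in> carrier_mat d d" and F: "\<And>i. F i \<in> carrier_mat d d"
    and a: "a < d" and b: "b < d"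
  shows "(Q * mat d d (\<lambda>(k, l). c * (if k = l then 1 else 0) + (\<Sum>i<n. w i * F i $$ (k, l))) * P) $$ (a, b)
    = c * (Q * P) $$ (a, b) + (\<Sum>i<n. w i * (Q * F i * P) $$ (a, b))"
proof -
  define X where "X = mat d d (\<lambda>(k, l). c * (if k = l then 1 else 0) + (\<Sum>i<n. w i * F i $$ (k, l)))"
  have X: "X \<in> carrier_mat d d" unfolding X_def by simp
  have QXe: "(Q * X) $$ (a, l) = c * Q $$ (a, l) + (\<Sum>i<n. w i * (Q * F i) $$ (a, l))" if l: "l < d" for l
  proof -
    have "(Q * X) $$ (a, l) = (\<Sum>k<d. Q $$ (a, k) * X $$ (k, l))"
      using Q X a l by (simp add: index_mult_mat scalar_prod_def row_def col_def atLeast0LessThan)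
    also have "\<dots> = (\<Sum>k<d. (if k = l then c * Q $$ (a, k) else 0) + (\<Sum>i<n. w i * (Q $$ (a, k) * F i $$ (k, l))))"
      unfolding X_def using l by (intro sum.cong refl) (simp add: algebra_simps sum_distrib_left)
    also have "\<dots> = c * Q $$ (a, l) + (\<Sum>k<d. \<Sum>i<n. w i * (Q $$ (a, k) * F i $$ (k, l)))"
      using l by (simp add: sum.distrib)
    also have "(\<Sum>k<d. \<Sum>i<n. w i * (Q $$ (a, k) * F i $$ (k, l))) = (\<Sum>i<n. \<Sum>k<d. w i * (Q $$ (a, k) * F i $$ (k, l)))"
      by (rule sum.swap)
    also have "\<dots> = (\<Sum>i<n. w i * (\<Sum>k<d. Q $$ (a, k) * F i $$ (k, l)))"
      by (simp add: sum_distrib_left)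
    also have "\<dots> = (\<Sum>i<n. w i * (Q * F i) $$ (a, l))"
    proof (intro sum.cong refl arg_cong2[where f="(*)"])
      fix i
      show "(\<Sum>k<d. Q $$ (a, k) * F i $$ (k, l)) = (Q * F i) $$ (a, l)"
        using Q F[of i] a l by (simp add: index_mult_mat scalar_prod_def row_def col_def atLeast0LessThan)
    qed
    finally show ?thesis .
  qed
  have "(Q * X * P) $$ (a, b) = (\<Sum>l<d. (Q * X) $$ (a, l) * P $$ (l, b))"
    using Q X P a b by (simp add: index_mult_mat scalar_prod_def row_def col_def atLeast0LessThan del: assoc_mult_mat)
  also have "\<dots> = (\<Sum>l<d. c * (Q $$ (a, l) * P $$ (l, b)) + (\<Sum>i<n. w i * ((Q * F i) $$ (a, l) * P $$ (l, b))))"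
    by (intro sum.cong refl) (simp add: QXe algebra_simps sum_distrib_right sum_distrib_left)
  also have "\<dots> = c * (\<Sum>l<d. Q $$ (a, l) * P $$ (l, b)) + (\<Sum>l<d. \<Sum>i<n. w i * ((Q * F i) $$ (a, l) * P $$ (l, b)))"
    by (simp add: sum.distrib sum_distrib_left)
  also have "\<dots> = c * (Q * P) $$ (a, b) + (\<Sum>i<n. w i * (Q * F i * P) $$ (a, b))"
  proof -
    have sw: "(\<Sum>l<d. \<Sum>i<n. w i * ((Q * F i) $$ (a, l) * P $$ (l, b)))
        = (\<Sum>i<n. w i * (\<Sum>l<d. (Q * F i) $$ (a, l) * P $$ (l, b)))"
      by (subst sum.swap) (simp add: sum_distrib_left)
    have fin: "(\<Sum>l<d. (Q * F i) $$ (a, l) * P $$ (l, b)) = (Q * F i * P) $$ (a, b)" for i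
      using Q P F[of i] a b by (simp add: index_mult_mat scalar_prod_def row_def col_def atLeast0LessThan del: assoc_mult_mat)
    have qp: "(\<Sum>l<d. Q $$ (a, l) * P $$ (l, b)) = (Q * P) $$ (a, b)"
      using Q P a b by (simp add: index_mult_mat scalar_prod_def row_def col_def atLeast0LessThan)
    show ?thesis by (simp only: sw fin qp)
  qed
  finally show ?thesis unfolding X_def .
qed

lemma conj_char_poly_fun:
  assumes c\<phi>: "\<And>x. \<phi> x \<in> carrier_mat d d" and P: "P \<in> carrier_mat d d" and Q: "Q \<in> carrier_mat d d"
    and QP: "Q * P = 1\<^sub>m d"
  shows "char_poly_fun hs d (\<lambda>x. Q * \<phi> x * P) = char_poly_fun hs d \<phi>"
proof
  fix z
  define X where "X = mat d d (\<lambda>(a, b). z 0 * (if a = b then 1 else 0) + (\<Sum>i<length hs. z (Suc i) * (\<phi> (hs ! i) $$ (a, b))))"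
  have X: "X \<in> carrier_mat d d" unfolding X_def by simp
  have eqm: "mat d d (\<lambda>(a, b). z 0 * (if a = b then 1 else 0) + (\<Sum>i<length hs. z (Suc i) * ((Q * \<phi> (hs ! i) * P) $$ (a, b))))
      = Q * X * P"
  proof (rule eq_matI)
    fix a b assume a: "a < dim_row (Q * X * P)" and b: "b < dim_col (Q * X * P)"
    then have a': "a < d" and b': "b < d" using Q P by auto
    show "mat d d (\<lambda>(a, b). z 0 * (if a = b then 1 else 0) + (\<Sum>i<length hs. z (Suc i) * ((Q * \<phi> (hs ! i) * P) $$ (a, b)))) $$ (a, b)
      = (Q * X * P) $$ (a, b)"
      unfolding X_def conj_lincomb_entry[OF Q P c\<phi> a' b'] using a' b' QP by simp
  qed (use Q P in auto)
  have "char_poly_fun hs d (\<lambda>x. Q * \<phi> x * P) z = det (Q * X * P)"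
    unfolding char_poly_fun_def eqm ..
  also have "\<dots> = det Q * det X * det P"
    using Q X P by (simp add: det_mult[of _ d])
  also have "\<dots> = det X * (det Q * det P)" by (simp add: ac_simps)
  also have "det Q * det P = 1" using det_mult[OF Q P] QP by simp
  finally show "char_poly_fun hs d (\<lambda>x. Q * \<phi> x * P) z = char_poly_fun hs d \<phi> z"
    unfolding char_poly_fun_def X_def by simp
qed

lemma rep_triangularize:
  assumes \<phi>: "lie_rep sc br d \<phi>"
    and comm: "\<forall>i<length hs. \<forall>j<length hs. \<phi> (hs ! i) * \<phi> (hs ! j) = \<phi> (hs ! j) * \<phi> (hs ! i)"
  shows "\<exists>\<phi>'. lie_rep sc br d \<phi>' \<and> char_poly_fun hs d \<phi>' = char_poly_fun hs d \<phi>
      \<and> (\<forall>i<length hs. upper_triangular (\<phi>' (hs ! i)))"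
proof -
  have c\<phi>: "\<And>x. \<phi> x \<in> carrier_mat d d" using \<phi> unfolding lie_rep_def by blast
  define As where "As = map \<phi> hs"
  have car: "\<forall>A\<in>set As. A \<in> carrier_mat d d" using c\<phi> unfolding As_def by auto
  have cm: "\<forall>A\<in>set As. \<forall>B\<in>set As. A * B = B * A"
    using comm unfolding As_def by (auto simp: in_set_conv_nth)
  obtain P Q where P: "P \<in> carrier_mat d d" and Q: "Q \<in> carrier_mat d d" and PQ: "P * Q = 1\<^sub>m d"
    and QP: "Q * P = 1\<^sub>m d" and T: "\<forall>A\<in>set As. \<exists>T. similar_mat_wit A T P Q \<and> upper_triangular T"
    using simul_triangular[OF car cm] by blast
  have ut: "upper_triangular (Q * \<phi> (hs ! i) * P)" if i: "i < length hs" for i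
  proof -
    have "\<phi> (hs ! i) \<in> set As" unfolding As_def using i by simp
    then obtain T where sim: "similar_mat_wit (\<phi> (hs ! i)) T P Q" and uT: "upper_triangular T" using T by blast
    have A: "\<phi> (hs ! i) = P * T * Q" and Tc: "T \<in> carrier_mat d d"
      using similar_mat_witD2[OF c\<phi> sim] by auto
    have TQ: "T * Q \<in> carrier_mat d d" using Tc Q by simp
    have PTQ: "P * (T * Q) \<in> carrier_mat d d" using P TQ by simp
    have "Q * \<phi> (hs ! i) * P = Q * (P * (T * Q)) * P"
      unfolding A by (simp only: assoc_mult_mat[OF P Tc Q])
    also have "\<dots> = Q * ((P * (T * Q)) * P)" by (rule assoc_mult_mat[OF Q PTQ P])
    also have "(P * (T * Q)) * P = P * ((T * Q) * P)" by (rule assoc_mult_mat[OF P TQ P])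
    also have "(T * Q) * P = T * (Q * P)" by (rule assoc_mult_mat[OF Tc Q P])
    also have "T * (Q * P) = T" using QP Tc by simp
    also have "Q * (P * T) = (Q * P) * T" by (rule assoc_mult_mat[symmetric, OF Q P Tc])
    also have "\<dots> = T" using QP Tc by simp
    finally show ?thesis using uT by simp
  qed
  show ?thesis
    by (intro exI[of _ "\<lambda>x. Q * \<phi> x * P"] conjI conj_rep[OF \<phi> P Q PQ] conj_char_poly_fun[OF c\<phi> P Q QP])
      (use ut in blast)
qed

lemma rep_comm:
  assumes \<phi>: "lie_rep sc br d \<phi>" and z: "br a b = 0"
  shows "\<phi> a * \<phi> b = \<phi> b * \<phi> a"
proof -
  have c\<phi>: "\<And>x. \<phi> x \<in> carrier_mat d d" and a\<phi>: "\<And>x y. \<phi> (x + y) = \<phi> x + \<phi> y"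
    and b\<phi>: "\<And>x y. \<phi> (br x y) = \<phi> x * \<phi> y - \<phi> y * \<phi> x"
    using \<phi> unfolding lie_rep_def by blast+
  have Z: "\<phi> 0 $$ (i, j) = 0" if "i < d" "j < d" for i j
  proof -
    have "\<phi> 0 = \<phi> 0 + \<phi> 0" using a\<phi>[of 0 0] by simp
    then have "\<phi> 0 $$ (i, j) = (\<phi> 0 + \<phi> 0) $$ (i, j)" by simp
    also have "\<dots> = \<phi> 0 $$ (i, j) + \<phi> 0 $$ (i, j)" using c\<phi>[of 0] that by simp
    finally show ?thesis by simp
  qed
  show ?thesis
  proof (rule eq_matI)
    fix i j assume i: "i < dim_row (\<phi> b * \<phi> a)" and j: "j < dim_col (\<phi> b * \<phi> a)"
    then have i': "i < d" and j': "j < d" using c\<phi>[of a] c\<phi>[of b] by auto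
    have "(\<phi> a * \<phi> b - \<phi> b * \<phi> a) $$ (i, j) = \<phi> 0 $$ (i, j)" using b\<phi>[of a b] z by simp
    also have "\<dots> = 0" by (rule Z[OF i' j'])
    finally show "(\<phi> a * \<phi> b) $$ (i, j) = (\<phi> b * \<phi> a) $$ (i, j)"
      using c\<phi>[of a] c\<phi>[of b] i' j' by simp
  qed (use c\<phi>[of a] c\<phi>[of b] in auto)
qed

lemma wts_len: "\<forall>c\<in>#wts hs d \<phi>. length c = length hs"
  unfolding wts_def by auto

lemma prod_mink: "(\<Prod>u\<in>#mink M N. g u) = (\<Prod>c\<in>#M. \<Prod>e\<in>#N. (g (map2 (+) c e) :: complex))"
  unfolding mink_def prod_mset_sum_mset by (simp add: multiset.map_comp o_def)

theorem theorem4p3: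
  fixes sc :: "complex \<Rightarrow> 'g::ab_group_add \<Rightarrow> 'g"
    and br :: "'g \<Rightarrow> 'g \<Rightarrow> 'g"
    and H :: "'g set"
    and al :: "('g \<Rightarrow> complex) list"
    and hs :: "'g list"
  assumes "lie_algebra sc br"
    and "finite_dim_lie sc"
    and "simple_lie sc br"
    and "cartan_subalgebra sc br H"
    and "simple_roots sc br H al"
    and "length hs = length al"
    and "\<forall>i<length al. is_coroot sc br H (al ! i) (hs ! i)"
  shows "comm_monoid \<lparr>carrier = CP sc br hs, monoid.mult = res_prod (length hs), one = (\<lambda>z. z 0)\<rparr>"
proof -
  define n where "n = length hs"
  have L: "lie_algebra sc br" by fact
  have T: "toral sc br H" using assms(4) unfolding cartan_subalgebra_def by blast
  have hsH: "hs ! i \<in> H" if "i < n" for i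
    using assms(6,7) that unfolding n_def is_coroot_def by auto
  have brz: "br (hs ! i) (hs ! j) = 0" if "i < n" "j < n" for i j
    by (rule toral_abelian[OF L T hsH[OF that(1)] hsH[OF that(2)]])
  have good: "\<exists>d \<phi>. lie_rep sc br d \<phi> \<and> (\<forall>i<n. upper_triangular (\<phi> (hs ! i)))
      \<and> F = lin_prod n (wts hs d \<phi>)" if F: "F \<in> CP sc br hs" for F
  proof -
    obtain d \<phi> where \<phi>: "lie_rep sc br d \<phi>" and Fe: "F = char_poly_fun hs d \<phi>"
      using F unfolding CP_def by blast
    have comm: "\<forall>i<length hs. \<forall>j<length hs. \<phi> (hs ! i) * \<phi> (hs ! j) = \<phi> (hs ! j) * \<phi> (hs ! i)"
      using rep_comm[OF \<phi> brz] n_def by auto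
    obtain \<phi>' where \<phi>': "lie_rep sc br d \<phi>'" and eq: "char_poly_fun hs d \<phi>' = char_poly_fun hs d \<phi>"
      and ut: "\<forall>i<length hs. upper_triangular (\<phi>' (hs ! i))"
      using rep_triangularize[OF \<phi> comm] by blast
    have car: "\<forall>i<length hs. \<phi>' (hs ! i) \<in> carrier_mat d d" using \<phi>' unfolding lie_rep_def by blast
    have "F = lin_prod n (wts hs d \<phi>')"
      using Fe eq char_poly_fun_tri[OF car ut] n_def by simp
    then show ?thesis using \<phi>' ut n_def by blast
  qed
  have fac: "\<exists>M. (\<forall>c\<in>#M. length c = n) \<and> F = lin_prod n M \<and> lin_factors n F = M"
    if F: "F \<in> CP sc br hs" for F
  proof -
    obtain d \<phi> where "F = lin_prod n (wts hs d \<phi>)" using good[OF F] by blast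
    moreover have "\<forall>c\<in>#wts hs d \<phi>. length c = n" using wts_len n_def by metis
    ultimately show ?thesis using lin_factors_eq by blast
  qed
  define L1 where "L1 z c = z 0 + (\<Sum>i<n. c ! i * z (Suc i))" for z :: "nat \<Rightarrow> complex" and c :: "complex list"
  have lpL: "lin_prod n M z = (\<Prod>c\<in>#M. L1 z c)" for M z unfolding lin_prod_def L1_def ..
  have resp: "res_prod n F G z = (\<Prod>c\<in>#lin_factors n F. \<Prod>e\<in>#lin_factors n G. L1 z (map2 (+) c e))" for F G z
    unfolding res_prod_mink lpL prod_mink ..
  have one_fac: "lin_factors n (\<lambda>z. z 0) = {#replicate n 0#}"
    using lin_factors_eq[of "{#replicate n 0#}" n] lin_prod_one[of n] by simp
  show ?thesis
  proof (rule comm_monoidI, simp_all only: partial_object.simps monoid.simps n_def[symmetric])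
    fix x y assume x: "x \<in> CP sc br hs" and y: "y \<in> CP sc br hs"
    obtain d \<phi> where \<phi>: "lie_rep sc br d \<phi>" and u\<phi>: "\<forall>i<n. upper_triangular (\<phi> (hs ! i))"
      and xe: "x = lin_prod n (wts hs d \<phi>)" using good[OF x] by blast
    obtain e \<psi> where \<psi>: "lie_rep sc br e \<psi>" and u\<psi>: "\<forall>i<n. upper_triangular (\<psi> (hs ! i))"
      and ye: "y = lin_prod n (wts hs e \<psi>)" using good[OF y] by blast
    have c\<phi>: "\<forall>i<length hs. \<phi> (hs ! i) \<in> carrier_mat d d" using \<phi> unfolding lie_rep_def by blast
    have c\<psi>: "\<forall>i<length hs. \<psi> (hs ! i) \<in> carrier_mat e e" using \<psi> unfolding lie_rep_def by blast
    define \<rho> where "\<rho> x = ksum d e (\<phi> x) (\<psi> x)" for x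
    have \<rho>: "lie_rep sc br (d * e) \<rho>" unfolding \<rho>_def by (rule ksum_rep[OF \<phi> \<psi>])
    have c\<rho>: "\<forall>i<length hs. \<rho> (hs ! i) \<in> carrier_mat (d * e) (d * e)" unfolding \<rho>_def by simp
    have u\<rho>: "\<forall>i<length hs. upper_triangular (\<rho> (hs ! i))"
      unfolding \<rho>_def using ksum_ut c\<phi> c\<psi> u\<phi> u\<psi> n_def by auto
    have lx: "lin_factors n x = wts hs d \<phi>" using xe lin_factors_eq wts_len n_def by metis
    have ly: "lin_factors n y = wts hs e \<psi>" using ye lin_factors_eq wts_len n_def by metis
    have "res_prod n x y = lin_prod n (mink (wts hs d \<phi>) (wts hs e \<psi>))"
      unfolding res_prod_mink lx ly ..
    also have "\<dots> = lin_prod n (wts hs (d * e) \<rho>)"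
      unfolding \<rho>_def n_def by (rule wts_ksum[OF c\<phi> c\<psi>, symmetric])
    also have "\<dots> = char_poly_fun hs (d * e) \<rho>"
      unfolding n_def by (rule char_poly_fun_tri[OF c\<rho> u\<rho>, symmetric])
    finally show "res_prod n x y \<in> CP sc br hs" unfolding CP_def using \<rho> by blast
  next
    define \<phi>0 where "\<phi>0 = (\<lambda>_::'g. 0\<^sub>m 1 1 :: complex mat)"
    have rep0: "lie_rep sc br 1 \<phi>0" unfolding lie_rep_def \<phi>0_def by auto
    have ut0: "\<forall>i<length hs. upper_triangular (\<phi>0 (hs ! i))"
      unfolding \<phi>0_def upper_triangular_def by auto
    have c0: "\<forall>i<length hs. \<phi>0 (hs ! i) \<in> carrier_mat 1 1" unfolding \<phi>0_def by auto
    have "wts hs 1 \<phi>0 = {#replicate n 0#}"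
      unfolding wts_def \<phi>0_def n_def by (simp add: map_replicate_const)
    then have cp0: "(\<lambda>z. z 0) = char_poly_fun hs 1 \<phi>0"
      using char_poly_fun_tri[OF c0 ut0] lin_prod_one[of n] n_def by simp
    show "(\<lambda>z. z 0) \<in> CP sc br hs" unfolding CP_def
      by (rule CollectI, rule exI[of _ 1], rule exI[of _ \<phi>0]) (use cp0 rep0 in blast)
  next
    fix x y z assume x: "x \<in> CP sc br hs" and y: "y \<in> CP sc br hs" and z: "z \<in> CP sc br hs"
    obtain Mx where Mx: "\<forall>c\<in>#Mx. length c = n" "lin_factors n x = Mx" using fac[OF x] by blast
    obtain My where My: "\<forall>c\<in>#My. length c = n" "lin_factors n y = My" using fac[OF y] by blast
    obtain Mz where Mz: "\<forall>c\<in>#Mz. length c = n" "lin_factors n z = Mz" using fac[OF z] by blast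
    have lxy: "lin_factors n (res_prod n x y) = mink Mx My"
      unfolding res_prod_mink Mx(2) My(2) by (rule lin_factors_eq[OF mink_len[OF Mx(1) My(1)]])
    have lyz: "lin_factors n (res_prod n y z) = mink My Mz"
      unfolding res_prod_mink My(2) Mz(2) by (rule lin_factors_eq[OF mink_len[OF My(1) Mz(1)]])
    show "res_prod n (res_prod n x y) z = res_prod n x (res_prod n y z)"
    proof
      fix w
      show "res_prod n (res_prod n x y) z w = res_prod n x (res_prod n y z) w"
        unfolding resp lxy lyz Mx(2) Mz(2) prod_mink by (simp add: map2_assoc)
    qed
  next
    fix x assume x: "x \<in> CP sc br hs"
    obtain Mx where Mx: "\<forall>c\<in>#Mx. length c = n" "x = lin_prod n Mx" "lin_factors n x = Mx"
      using fac[OF x] by blast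
    show "res_prod n (\<lambda>z. z 0) x = x"
    proof
      fix w
      have "res_prod n (\<lambda>z. z 0) x w = (\<Prod>e\<in>#Mx. L1 w (map2 (+) (replicate n 0) e))"
        unfolding resp one_fac Mx(3) by simp
      also have "\<dots> = (\<Prod>e\<in>#Mx. L1 w e)"
        by (rule arg_cong[where f=prod_mset], rule image_mset_cong) (simp add: map2_zero_left Mx(1))
      also have "\<dots> = x w" unfolding Mx(2) lpL ..
      finally show "res_prod n (\<lambda>z. z 0) x w = x w" .
    qed
  next
    fix x y assume x: "x \<in> CP sc br hs" and y: "y \<in> CP sc br hs"
    show "res_prod n x y = res_prod n y x"
    proof
      fix w
      show "res_prod n x y w = res_prod n y x w"
        unfolding resp by (subst prod_mset_swap) (simp add: map2_comm)
    qed
  qed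
qed

end
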